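(* Let $G=(V,E)$ be a network, $s,t\in V$, and $S\in[S_{min},1]$. Run the CO-TSCMQ algorithm on $G,s,t,S$. If there exists a survivable connection from $s$ to $t$ with survivability level at least $S$, the algorithm returns a survivable connection that is an optimal solution of the CO-Constrained Survivability Min-QoS problem. Otherwise, the algorithm fails.
   Context: A network is a directed graph $G=(V,E)$, $N=|V|$, $M=|E|$. Each link $e$ has a failure probability $p_e\in(0,p_{max}]$ with $p_{max}<1$, and a positive weight $w_e$. Paths are identified with their sets of links. $P^{(s,t)}$ is the set of simple $s$–$t$ paths, and $S_{min}=(1-p_{max})^M$. A survivable connection is a pair $(\pi_1,\pi_2)\in P^{(s,t)}\times P^{(s,t)}$; the two paths may coincide. Its survivability level is $\prod_{e\in\pi_1\cap\pi_2}(1-p_e)$, equal to $1$ if $\pi_1\cap\pi_2=\emptyset$. Its CO-weight is $W_{CO}(\pi_1,\pi_2)=\sum_{e\in\pi_1\cup\pi_2}w_e$. CO-Constrained Survivability Min-QoS (CO-CSMQ) problem: find a survivable connection minimizing $W_{CO}$ subject to survivability level $\ge S$. Restricted Shortest Path (RSP) problem: given a graph in which each link has a length $l_e$ and a time $t_e$, a bound $T$, and two nodes, find a path between them minimizing $\sum l_e$ subject to $\sum t_e\le T$. CO-TSCMQ algorithm: 1. Build a multigraph $\tilde G$ on node set $V$. For each link $e=(u,v)\in E$, add a "simple link" $u\to v$ with weight $w_e$ and survivability cost $-\ln(1-p_e)$. 2. For each ordered pair of nodes $(u,v)$ for which a pair of link-disjoint $u$–$v$ paths exists, compute a pair of link-disjoint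 $u$–$v$ paths of minimum total weight (an edge-disjoint shortest pair, EDSPoP). Add a "disjoint link" $u\to v$ with weight equal to that total weight and survivability cost $0$. 3. Solve exactly the RSP instance on $\tilde G$ from $s$ to $t$ that minimizes total weight subject to total survivability cost $\le -\ln S$. If no feasible path exists, fail. 4. Otherwise, from the returned path $\tilde\pi$ build $(\pi_1,\pi_2)$. Each simple link contributes its original link to both $\pi_1$ and $\pi_2$. Each disjoint link contributes one path of its EDSPoP to $\pi_1$ and the other to $\pi_2$. Return $(\pi_1,\pi_2)$. *)

theory Defs
  imports Complex_Main
begin

fun walk :: "('e \<Rightarrow> 'v) \<Rightarrow> ('e \<Rightarrow> 'v) \<Rightarrow> 'e set \<Rightarrow> 'v \<Rightarrow> 'e list \<Rightarrow> 'v \<Rightarrow> bool" where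
  "walk src dst E u [] v = (u = v)"
| "walk src dst E u (e # es) v = (e \<in> E \<and> src e = u \<and> walk src dst E (dst e) es v)"

definition simple_path :: "('e \<Rightarrow> 'v) \<Rightarrow> ('e \<Rightarrow> 'v) \<Rightarrow> 'e set \<Rightarrow> 'v \<Rightarrow> 'e list \<Rightarrow> 'v \<Rightarrow> bool" where
  "simple_path src dst E u es v \<longleftrightarrow> walk src dst E u es v \<and> distinct (u # map dst es)"

definition paths :: "('e \<Rightarrow> 'v) \<Rightarrow> ('e \<Rightarrow> 'v) \<Rightarrow> 'e set \<Rightarrow> 'v \<Rightarrow> 'v \<Rightarrow> 'e set set" where
  "paths src dst E s t = {set es | es. simple_path src dst E s es t}"

definition network :: "'v set \<Rightarrow> 'e set \<Rightarrow> ('e \<Rightarrow> 'v) \<Rightarrow> ('e \<Rightarrow> 'v) \<Rightarrow> ('e \<Rightarrow> real) \<Rightarrow> real \<Rightarrow> ('e \<Rightarrow> real) \<Rightarrow> bool" where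
  "network V E src dst p pmax w \<longleftrightarrow> finite V \<and> finite E \<and> (\<forall>e\<in>E. src e \<in> V \<and> dst e \<in> V)
     \<and> pmax < 1 \<and> (\<forall>e\<in>E. 0 < p e \<and> p e \<le> pmax) \<and> (\<forall>e\<in>E. 0 < w e)"

definition S_min :: "'e set \<Rightarrow> real \<Rightarrow> real" where
  "S_min E pmax = (1 - pmax) ^ card E"

definition surv_level :: "('e \<Rightarrow> real) \<Rightarrow> 'e set \<Rightarrow> 'e set \<Rightarrow> real" where
  "surv_level p \<pi>1 \<pi>2 = (\<Prod>e\<in>\<pi>1 \<inter> \<pi>2. 1 - p e)"

definition W_CO :: "('e \<Rightarrow> real) \<Rightarrow> 'e set \<Rightarrow> 'e set \<Rightarrow> real" where
  "W_CO w \<pi>1 \<pi>2 = (\<Sum>e\<in>\<pi>1 \<union> \<pi>2. w e)"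

definition feasible_conn where
  "feasible_conn src dst E p s t S \<pi>1 \<pi>2 \<longleftrightarrow>
     \<pi>1 \<in> paths src dst E s t \<and> \<pi>2 \<in> paths src dst E s t \<and> surv_level p \<pi>1 \<pi>2 \<ge> S"

definition co_csmq_optimal where
  "co_csmq_optimal src dst E p w s t S \<pi>1 \<pi>2 \<longleftrightarrow>
     feasible_conn src dst E p s t S \<pi>1 \<pi>2 \<and>
     (\<forall>\<rho>1 \<rho>2. feasible_conn src dst E p s t S \<rho>1 \<rho>2 \<longrightarrow> W_CO w \<pi>1 \<pi>2 \<le> W_CO w \<rho>1 \<rho>2)"

definition disj_pair where
  "disj_pair src dst E u v ab \<longleftrightarrow>
     simple_path src dst E u (fst ab) v \<and> simple_path src dst E u (snd ab) v \<and>
     set (fst ab) \<inter> set (snd ab) = {}"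

definition pair_weight :: "('e \<Rightarrow> real) \<Rightarrow> 'e list \<times> 'e list \<Rightarrow> real" where
  "pair_weight w ab = (\<Sum>e\<in>set (fst ab). w e) + (\<Sum>e\<in>set (snd ab). w e)"

definition edspop_choice where
  "edspop_choice V E src dst w D \<longleftrightarrow>
     (\<forall>u\<in>V. \<forall>v\<in>V. (\<exists>ab. disj_pair src dst E u v ab) \<longrightarrow>
        disj_pair src dst E u v (D u v) \<and>
        (\<forall>ab. disj_pair src dst E u v ab \<longrightarrow> pair_weight w (D u v) \<le> pair_weight w ab))"

datatype ('v, 'e) tlink = SimpleL 'e | DisjL 'v 'v

fun ttl :: "('e \<Rightarrow> 'v) \<Rightarrow> ('v, 'e) tlink \<Rightarrow> 'v" where
  "ttl src (SimpleL e) = src e"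
| "ttl src (DisjL u v) = u"

fun thd :: "('e \<Rightarrow> 'v) \<Rightarrow> ('v, 'e) tlink \<Rightarrow> 'v" where
  "thd dst (SimpleL e) = dst e"
| "thd dst (DisjL u v) = v"

definition tE :: "'v set \<Rightarrow> 'e set \<Rightarrow> ('e \<Rightarrow> 'v) \<Rightarrow> ('e \<Rightarrow> 'v) \<Rightarrow> ('v, 'e) tlink set" where
  "tE V E src dst = SimpleL ` E \<union>
     {DisjL u v | u v. u \<in> V \<and> v \<in> V \<and> (\<exists>ab. disj_pair src dst E u v ab)}"

fun tweight :: "('e \<Rightarrow> real) \<Rightarrow> ('v \<Rightarrow> 'v \<Rightarrow> 'e list \<times> 'e list) \<Rightarrow> ('v, 'e) tlink \<Rightarrow> real" where
  "tweight w D (SimpleL e) = w e"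
| "tweight w D (DisjL u v) = pair_weight w (D u v)"

fun tcost :: "('e \<Rightarrow> real) \<Rightarrow> ('v, 'e) tlink \<Rightarrow> real" where
  "tcost p (SimpleL e) = - ln (1 - p e)"
| "tcost p (DisjL u v) = 0"

definition rsp_feasible where
  "rsp_feasible V E src dst p s t S tp \<longleftrightarrow>
     simple_path (ttl src) (thd dst) (tE V E src dst) s tp t \<and> sum_list (map (tcost p) tp) \<le> - ln S"

definition rsp_optimal where
  "rsp_optimal V E src dst p w D s t S tp \<longleftrightarrow>
     rsp_feasible V E src dst p s t S tp \<and>
     (\<forall>tq. rsp_feasible V E src dst p s t S tq \<longrightarrow>
        sum_list (map (tweight w D) tp) \<le> sum_list (map (tweight w D) tq))"

fun part1 :: "('v \<Rightarrow> 'v \<Rightarrow> 'e list \<times> 'e list) \<Rightarrow> ('v, 'e) tlink \<Rightarrow> 'e set" where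
  "part1 D (SimpleL e) = {e}"
| "part1 D (DisjL u v) = set (fst (D u v))"

fun part2 :: "('v \<Rightarrow> 'v \<Rightarrow> 'e list \<times> 'e list) \<Rightarrow> ('v, 'e) tlink \<Rightarrow> 'e set" where
  "part2 D (SimpleL e) = {e}"
| "part2 D (DisjL u v) = set (snd (D u v))"

definition build where
  "build D tp = (\<Union>l\<in>set tp. part1 D l, \<Union>l\<in>set tp. part2 D l)"

text \<open>co_tscmq ... res: res is a possible outcome of the CO-TSCMQ algorithm (None = failure),
  for some valid choice of EDSPoPs and some exact RSP solution.\<close>
definition co_tscmq where
  "co_tscmq V E src dst p w s t S res \<longleftrightarrow>
     (\<exists>D. edspop_choice V E src dst w D \<and>
        (if \<exists>tp. rsp_feasible V E src dst p s t S tp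
         then (\<exists>tp. rsp_optimal V E src dst p w D s t S tp \<and> res = Some (build D tp))
         else res = None))"

end

theory Submission
  imports Defs
begin

lemma walk_iff: "walk src dst E u xs v \<longleftrightarrow> set xs \<subseteq> E \<and> walk src dst UNIV u xs v"
  by (induction xs arbitrary: u) auto

lemma walk_mono: "walk src dst E u xs v \<Longrightarrow> E \<subseteq> E' \<Longrightarrow> walk src dst E' u xs v"
  by (induction xs arbitrary: u) auto

lemma walk_last: "walk src dst E u xs v \<Longrightarrow> v = last (u # map dst xs)"
  by (induction xs arbitrary: u) auto

lemma walk_append: "walk src dst E u (xs @ ys) v \<longleftrightarrow> (\<exists>m. walk src dst E u xs m \<and> walk src dst E m ys v)"
  by (induction xs arbitrary: u) auto

lemma walk_Cons_iff: "walk src dst E u (e # xs) v \<longleftrightarrow> e \<in> E \<and> src e = u \<and> walk src dst E (dst e) xs v"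
  by simp

lemma walk_split: "walk src dst E a ys b \<Longrightarrow> x \<in> set (a # map dst ys) \<Longrightarrow>
   \<exists>ys1 ys2. ys = ys1 @ ys2 \<and> walk src dst E a ys1 x \<and> walk src dst E x ys2 b"
proof (induction ys arbitrary: a)
  case Nil then show ?case by auto
next
  case (Cons e ys)
  show ?case
  proof (cases "x = a")
    case True then show ?thesis using Cons.prems by (intro exI[of _ "[]"] exI[of _ "e # ys"]) auto
  next
    case False
    then have "x \<in> set (dst e # map dst ys)" using Cons.prems by auto
    from Cons.IH[OF _ this] Cons.prems(1) obtain ys1 ys2 where "ys = ys1 @ ys2"
      "walk src dst E (dst e) ys1 x" "walk src dst E x ys2 b" by auto
    then show ?thesis using Cons.prems(1) by (intro exI[of _ "e # ys1"] exI[of _ ys2]) auto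
  qed
qed

lemma walk_src_in: "walk src dst E a xs b \<Longrightarrow> g \<in> set xs \<Longrightarrow> src g \<in> set (butlast (a # map dst xs))"
proof (induction xs arbitrary: a)
  case Nil then show ?case by simp
next
  case (Cons e xs)
  show ?case
  proof (cases "g = e")
    case True then show ?thesis using Cons.prems by auto
  next
    case False
    then have "src g \<in> set (butlast (dst e # map dst xs))" using Cons by auto
    then show ?thesis by (cases xs) auto
  qed
qed

lemma walk_dst_in: "walk src dst E a xs b \<Longrightarrow> g \<in> set xs \<Longrightarrow> dst g \<in> set (map dst xs)"
  by auto

lemma simple_path_distinct: "simple_path src dst E u xs v \<Longrightarrow> distinct xs"
  unfolding simple_path_def by (auto dest: distinct_map[THEN iffD1])

lemma simple_path_Nil[simp]: "simple_path src dst E u [] v \<longleftrightarrow> u = v"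
  by (simp add: simple_path_def)

lemma simple_path_Cons: "simple_path src dst E u (e # xs) v \<longleftrightarrow>
   e \<in> E \<and> src e = u \<and> simple_path src dst E (dst e) xs v \<and> u \<notin> set (dst e # map dst xs)"
  by (auto simp: simple_path_def)

lemma simple_path_append: "simple_path src dst E a (xs @ ys) b \<longleftrightarrow>
   (\<exists>m. simple_path src dst E a xs m \<and> simple_path src dst E m ys b \<and> set (a # map dst xs) \<inter> set (map dst ys) = {})"
proof
  assume h: "simple_path src dst E a (xs @ ys) b"
  then obtain m where m: "walk src dst E a xs m" "walk src dst E m ys b" by (auto simp: simple_path_def walk_append)
  have "m = last (a # map dst xs)" using walk_last[OF m(1)] .
  then have "m \<in> set (a # map dst xs)" by (metis last_in_set list.distinct(1))
  then show "\<exists>m. simple_path src dst E a xs m \<and> simple_path src dst E m ys b \<and> set (a # map dst xs) \<inter> set (map dst ys) = {}"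
    using h m by (intro exI[of _ m]) (auto simp: simple_path_def)
next
  assume "\<exists>m. simple_path src dst E a xs m \<and> simple_path src dst E m ys b \<and> set (a # map dst xs) \<inter> set (map dst ys) = {}"
  then show "simple_path src dst E a (xs @ ys) b" by (auto simp: simple_path_def walk_append)
qed

lemma simple_path_same: "simple_path src dst E u xs u \<Longrightarrow> xs = []"
proof -
  assume a: "simple_path src dst E u xs u"
  show "xs = []"
  proof (rule ccontr)
    assume "xs \<noteq> []"
    then have "u = last (map dst xs)" using walk_last[of src dst E u xs u] a
      by (auto simp: simple_path_def)
    then have "u \<in> set (map dst xs)" using \<open>xs \<noteq> []\<close> by (metis last_in_set Nil_is_map_conv)
    then show False using a by (auto simp: simple_path_def)
  qed
qed

lemma simple_path_split: "simple_path src dst E a ys b \<Longrightarrow> x \<in> set (a # map dst ys) \<Longrightarrow>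
   \<exists>ys1 ys2. ys = ys1 @ ys2 \<and> simple_path src dst E a ys1 x \<and> simple_path src dst E x ys2 b
      \<and> set (a # map dst ys1) \<inter> set (map dst ys2) = {}"
proof -
  assume a: "simple_path src dst E a ys b" and x: "x \<in> set (a # map dst ys)"
  then obtain ys1 ys2 where y: "ys = ys1 @ ys2" "walk src dst E a ys1 x" "walk src dst E x ys2 b"
    using walk_split[of src dst E a ys b x] by (auto simp: simple_path_def)
  then obtain m where m: "simple_path src dst E a ys1 m" "simple_path src dst E m ys2 b"
     "set (a # map dst ys1) \<inter> set (map dst ys2) = {}" using a simple_path_append by metis
  have "m = x" using walk_last[OF y(2)] walk_last[of src dst E a ys1 m] m(1) by (simp add: simple_path_def)
  then show ?thesis using y m by blast
qed

lemma shortcut: "walk src dst E u xs v \<Longrightarrow> \<exists>ys. simple_path src dst E u ys v \<and> set ys \<subseteq> set xs \<and> length ys \<le> length xs"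
proof (induction xs arbitrary: u)
  case Nil then show ?case by (intro exI[of _ "[]"]) (auto simp: simple_path_def)
next
  case (Cons e xs)
  then obtain ys where ys: "simple_path src dst E (dst e) ys v" "set ys \<subseteq> set xs" "length ys \<le> length xs"
    by auto
  show ?case
  proof (cases "u \<in> set (dst e # map dst ys)")
    case True
    from simple_path_split[OF ys(1) True] obtain ys1 ys2 where "ys = ys1 @ ys2"
      "simple_path src dst E u ys2 v" by auto
    then show ?thesis using ys by (intro exI[of _ ys2]) auto
  next
    case False
    then show ?thesis using Cons.prems ys by (intro exI[of _ "e # ys"]) (auto simp: simple_path_Cons)
  qed
qed

lemma first_hit: "walk src dst E a P b \<Longrightarrow> b \<in> S \<Longrightarrow>
  \<exists>P1 P2 y. P = P1 @ P2 \<and> walk src dst E a P1 y \<and> walk src dst E y P2 b \<and> y \<in> S \<and>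
     (\<forall>x\<in>set (butlast (a # map dst P1)). x \<notin> S)"
proof (induction P arbitrary: a)
  case Nil then show ?case by (intro exI[of _ "[]"]) auto
next
  case (Cons e P)
  show ?case
  proof (cases "a \<in> S")
    case True then show ?thesis using Cons.prems by (intro exI[of _ "[]"] exI[of _ "e # P"] exI[of _ a]) auto
  next
    case False
    from Cons.IH[of "dst e"] Cons.prems obtain P1 P2 y where h: "P = P1 @ P2" "walk src dst E (dst e) P1 y" "walk src dst E y P2 b" "y \<in> S"
      "\<forall>x\<in>set (butlast (dst e # map dst P1)). x \<notin> S" by auto
    have "\<forall>x\<in>set (butlast (a # map dst (e # P1))). x \<notin> S" using h(5) False by auto
    then show ?thesis using h Cons.prems by (intro exI[of _ "e # P1"] exI[of _ P2] exI[of _ y]) auto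
  qed
qed

lemma simple_src_hd: assumes sp: "simple_path src dst E a xs b" and g: "g \<in> set xs" "src g = a" shows "g = hd xs"
proof (cases xs)
  case Nil then show ?thesis using g by simp
next
  case (Cons x xs')
  show ?thesis
  proof (rule ccontr)
    assume "g \<noteq> hd xs"
    then have "g \<in> set xs'" using g Cons by auto
    moreover have "walk src dst E (dst x) xs' b" using sp Cons by (simp add: simple_path_def)
    ultimately have "src g \<in> set (butlast (dst x # map dst xs'))" using walk_src_in by metis
    then have "src g \<in> set (dst x # map dst xs')" by (meson in_set_butlastD)
    then have "src g \<in> set (map dst xs)" using Cons by simp
    then show False using sp g by (auto simp: simple_path_def)
  qed
qed

lemma simple_path_append_at: "simple_path src dst E a (xs @ ys) b \<Longrightarrow> walk src dst E a xs m \<Longrightarrow>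
  simple_path src dst E a xs m \<and> simple_path src dst E m ys b \<and> set (a # map dst xs) \<inter> set (map dst ys) = {}"
proof -
  assume h: "simple_path src dst E a (xs @ ys) b" "walk src dst E a xs m"
  then obtain m' where m': "simple_path src dst E a xs m'" "simple_path src dst E m' ys b"
     "set (a # map dst xs) \<inter> set (map dst ys) = {}" using simple_path_append by metis
  have "m = m'" using walk_last[OF h(2)] walk_last[of src dst E a xs m'] m'(1) by (simp add: simple_path_def)
  then show ?thesis using m' by simp
qed

lemma set_butlast_last: "xs \<noteq> [] \<Longrightarrow> set xs = set (butlast xs) \<union> {last xs}"
  by (metis append_butlast_last_id set_append empty_set list.simps(15) sup_bot.right_neutral)

lemma sum_mono_sub: "finite B \<Longrightarrow> A \<subseteq> B \<Longrightarrow> (\<forall>b\<in>B. 0 \<le> (f b::real)) \<Longrightarrow> sum f A \<le> sum f B"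
  by (rule sum_mono2) auto

lemma simple_path_edges: "simple_path src dst E u P v \<Longrightarrow> set P \<subseteq> E"
  by (auto simp: simple_path_def walk_iff[of src dst E])

lemma lemA:
  fixes V :: "'v set" and E :: "'e set"
  assumes Vc: "\<forall>e\<in>E. src e \<in> V \<and> dst e \<in> V"
    and cnn: "\<forall>e\<in>E. 0 \<le> - ln (1 - p e)" and wnn: "\<forall>e\<in>E. 0 \<le> w e"
    and D: "edspop_choice V E src dst w D"
  shows "u \<in> V \<Longrightarrow> simple_path src dst E u P t \<Longrightarrow> simple_path src dst E u Q t \<Longrightarrow>
   \<exists>tq. simple_path (ttl src) (thd dst) (tE V E src dst) u tq t \<and>
        set (map (thd dst) tq) \<subseteq> set (map dst P) \<union> set (map dst Q) \<and>
        sum_list (map (tcost p) tq) \<le> (\<Sum>e\<in>set P \<inter> set Q. - ln (1 - p e)) \<and>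
        sum_list (map (tweight w D) tq) \<le> (\<Sum>e\<in>set P \<union> set Q. w e)"
proof (induction "length P + length Q" arbitrary: u P Q rule: less_induct)
  case less
  note uV = less.prems(1) and sP = less.prems(2) and sQ = less.prems(3)
  have PE: "set P \<subseteq> E" and QE: "set Q \<subseteq> E" using sP sQ simple_path_edges by metis+
  have dP: "distinct P" and dQ: "distinct Q" using sP sQ simple_path_distinct by metis+
  show ?case
  proof (cases P)
    case Nil
    then have "u = t" using sP by simp
    then have "Q = []" using sQ simple_path_same by metis
    then show ?thesis using Nil \<open>u = t\<close> by (intro exI[of _ "[]"]) auto
  next
    case (Cons e P1')
    obtain f Q1' where Qc: "Q = f # Q1'"
    proof (cases Q)
      case Nil
      then have "u = t" using sQ by simp
      then have "P = []" using sP simple_path_same by metis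
      then show ?thesis using Cons by simp
    next
      case (Cons a list) then show ?thesis using that by blast
    qed
    show ?thesis
    proof (cases "e = f")
      case True
      have eE: "e \<in> E" and se: "src e = u" and sP1: "simple_path src dst E (dst e) P1' t"
        and uP: "u \<notin> set (dst e # map dst P1')" using sP Cons by (auto simp: simple_path_Cons)
      have sQ1: "simple_path src dst E (dst e) Q1' t" and uQ: "u \<notin> set (dst e # map dst Q1')"
        using sQ Qc True by (auto simp: simple_path_Cons)
      have "dst e \<in> V" using Vc eE by auto
      from less.hyps[OF _ this sP1 sQ1] Cons Qc obtain tq where tq:
        "simple_path (ttl src) (thd dst) (tE V E src dst) (dst e) tq t"
        "set (map (thd dst) tq) \<subseteq> set (map dst P1') \<union> set (map dst Q1')"
        "sum_list (map (tcost p) tq) \<le> (\<Sum>e\<in>set P1' \<inter> set Q1'. - ln (1 - p e))"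
        "sum_list (map (tweight w D) tq) \<le> (\<Sum>e\<in>set P1' \<union> set Q1'. w e)" by auto
      have eP1: "e \<notin> set P1'" using dP Cons by simp
      have eQ1: "e \<notin> set Q1'" using dQ Qc True by simp
      have i1: "set P \<inter> set Q = insert e (set P1' \<inter> set Q1')" using Cons Qc True by auto
      have i2: "set P \<union> set Q = insert e (set P1' \<union> set Q1')" using Cons Qc True by auto
      have "simple_path (ttl src) (thd dst) (tE V E src dst) u (SimpleL e # tq) t"
        using tq(1,2) eE se uP uQ by (auto simp: simple_path_Cons tE_def)
      moreover have "sum_list (map (tcost p) (SimpleL e # tq)) \<le> (\<Sum>e\<in>set P \<inter> set Q. - ln (1 - p e))"
        using tq(3) eP1 by (simp add: i1)
      moreover have "sum_list (map (tweight w D) (SimpleL e # tq)) \<le> (\<Sum>e\<in>set P \<union> set Q. w e)"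
        using tq(4) eP1 eQ1 by (simp add: i2)
      moreover have "set (map (thd dst) (SimpleL e # tq)) \<subseteq> set (map dst P) \<union> set (map dst Q)"
        using tq(2) Cons Qc by auto
      ultimately show ?thesis by blast
    next
      case False
      let ?S = "set (map dst Q)"
      have wP: "walk src dst E u P t" using sP by (simp add: simple_path_def)
      have tS: "t \<in> ?S"
      proof -
        have "t = last (u # map dst Q)" using walk_last[of src dst E u Q t] sQ by (simp add: simple_path_def)
        then have "t = last (map dst Q)" using Qc by simp
        then show ?thesis using Qc by (metis last_in_set list.map_disc_iff list.distinct(1))
      qed
      obtain P1 P2 y where fh: "P = P1 @ P2" "walk src dst E u P1 y" "walk src dst E y P2 t" "y \<in> ?S"
        "\<forall>x\<in>set (butlast (u # map dst P1)). x \<notin> ?S" using first_hit[OF wP tS] by blast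
      have uS: "u \<notin> ?S" using sQ by (simp add: simple_path_def)
      have P1ne: "P1 \<noteq> []" using fh uS by auto
      have yl: "y = last (u # map dst P1)" using walk_last[OF fh(2)] .
      have spP: "simple_path src dst E u P1 y" "simple_path src dst E y P2 t"
        "set (u # map dst P1) \<inter> set (map dst P2) = {}"
        using simple_path_append_at[of src dst E u P1 P2 t y] sP fh by auto
      have "y \<in> set (u # map dst Q)" using fh by simp
      from simple_path_split[OF sQ this] obtain Q1 Q2 where
        qs: "Q = Q1 @ Q2" "simple_path src dst E u Q1 y" "simple_path src dst E y Q2 t"
           "set (u # map dst Q1) \<inter> set (map dst Q2) = {}" by blast
      have yu: "y \<noteq> u" using fh uS by auto
      have Q1ne: "Q1 \<noteq> []" using qs(2) yu by auto
      have hdP: "hd P1 = e" using Cons fh P1ne by (cases P1) auto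
      have hdQ: "hd Q1 = f" using Qc qs Q1ne by (cases Q1) auto
      have h1: "set P1 \<inter> set Q = {}"
      proof (rule ccontr)
        assume "set P1 \<inter> set Q \<noteq> {}"
        then obtain g where g: "g \<in> set P1" "g \<in> set Q" by auto
        have "src g \<in> set (butlast (u # map dst P1))" using walk_src_in[OF fh(2) g(1)] .
        then have "src g \<notin> ?S" using fh(5) by blast
        moreover have "src g \<in> set (butlast (u # map dst Q))"
        proof -
          have "walk src dst E u Q t" using sQ by (simp add: simple_path_def)
          then show ?thesis using walk_src_in g(2) by metis
        qed
        ultimately have "src g = u" by (metis in_set_butlastD set_ConsD)
        then have "g = hd Q" using simple_src_hd[OF sQ g(2)] by simp
        moreover have "g = hd P1" using simple_src_hd[OF spP(1) g(1) \<open>src g = u\<close>] .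
        ultimately show False using hdP Qc False by simp
      qed
      have h2: "set P1 \<inter> set P2 = {}" using dP fh by simp
      have h3: "set Q1 \<inter> set Q2 = {}" using dQ qs by simp
      have yV: "y \<in> V" using fh(4) QE Vc by auto
      have dp: "disj_pair src dst E u y (P1, Q1)" unfolding disj_pair_def using spP qs h1 by auto
      then have pw: "pair_weight w (D u y) \<le> (\<Sum>e\<in>set P1. w e) + (\<Sum>e\<in>set Q1. w e)"
        using D uV yV unfolding edspop_choice_def pair_weight_def by fastforce
      have DinE: "DisjL u y \<in> tE V E src dst" unfolding tE_def using uV yV dp by blast
      have uPQ: "u \<notin> set (map dst P) \<union> set (map dst Q)" using sP sQ by (simp add: simple_path_def)
      show ?thesis
      proof (cases "set Q1 \<inter> set P2 = {}")
        case True
        have "length P2 + length Q2 < length P + length Q" using fh qs P1ne by simp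
        from less.hyps[OF this yV spP(2) qs(3)] obtain tq where tq:
          "simple_path (ttl src) (thd dst) (tE V E src dst) y tq t"
          "set (map (thd dst) tq) \<subseteq> set (map dst P2) \<union> set (map dst Q2)"
          "sum_list (map (tcost p) tq) \<le> (\<Sum>e\<in>set P2 \<inter> set Q2. - ln (1 - p e))"
          "sum_list (map (tweight w D) tq) \<le> (\<Sum>e\<in>set P2 \<union> set Q2. w e)" by blast
        have hs: "set (map (thd dst) tq) \<subseteq> set (map dst P) \<union> set (map dst Q)" using tq(2) fh qs by auto
        have yP: "y \<in> set (map dst P)" using yl P1ne fh by (simp add: last_map)
        have "simple_path (ttl src) (thd dst) (tE V E src dst) u (DisjL u y # tq) t"
          using tq(1) DinE hs uPQ yP by (auto simp: simple_path_Cons)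
        moreover have "set (map (thd dst) (DisjL u y # tq)) \<subseteq> set (map dst P) \<union> set (map dst Q)"
          using hs yP by auto
        moreover have "sum_list (map (tcost p) (DisjL u y # tq)) \<le> (\<Sum>e\<in>set P \<inter> set Q. - ln (1 - p e))"
        proof -
          have "(\<Sum>e\<in>set P2 \<inter> set Q2. - ln (1 - p e)) \<le> (\<Sum>e\<in>set P \<inter> set Q. - ln (1 - p e))"
            using PE cnn fh qs by (intro sum_mono_sub) auto
          then show ?thesis using tq(3) by simp
        qed
        moreover have "sum_list (map (tweight w D) (DisjL u y # tq)) \<le> (\<Sum>e\<in>set P \<union> set Q. w e)"
        proof -
          have eq: "set P \<union> set Q = set P1 \<union> (set Q1 \<union> (set P2 \<union> set Q2))" using fh qs by auto
          have "(\<Sum>e\<in>set P \<union> set Q. w e) = (\<Sum>e\<in>set P1. w e) + ((\<Sum>e\<in>set Q1. w e) + (\<Sum>e\<in>set P2 \<union> set Q2. w e))"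
          proof -
            have d1: "set P1 \<inter> (set Q1 \<union> (set P2 \<union> set Q2)) = {}" using h1 h2 qs by auto
            have d2: "set Q1 \<inter> (set P2 \<union> set Q2) = {}" using h3 True by auto
            show ?thesis unfolding eq sum.union_disjoint[OF finite_set _ d1, simplified]
              sum.union_disjoint[OF finite_set _ d2, simplified] ..
          qed
          then show ?thesis using tq(4) pw by simp
        qed
        ultimately show ?thesis by blast
      next
        case False
        then obtain g where g: "g \<in> set Q1" "g \<in> set P2" by auto
        obtain Pa Pb where Pab: "P2 = Pa @ g # Pb" using split_list[OF g(2)] by blast
        obtain Qa Qb where Qab: "Q1 = Qa @ g # Qb" using split_list[OF g(1)] by blast
        have wPb: "walk src dst E (dst g) Pb t" using spP(2) Pab by (auto simp: simple_path_def walk_append)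
        have wQa: "walk src dst E u Qa (src g)" and gE: "g \<in> E"
          using qs(2) Qab by (auto simp: simple_path_def walk_append)
        have wQ': "walk src dst E u (Qa @ g # Pb) t" using wPb wQa gE by (auto simp: walk_append)
        obtain Q'' where Q'': "simple_path src dst E u Q'' t" "set Q'' \<subseteq> set (Qa @ g # Pb)"
          "length Q'' \<le> length (Qa @ g # Pb)" using shortcut[OF wQ'] by blast
        have dis: "set (u # map dst P1) \<inter> set (map dst Q2) = {}"
        proof -
          have "set (map dst Q2) \<subseteq> ?S" using qs by auto
          moreover have "y \<notin> set (map dst Q2)"
          proof -
            have "y = last (u # map dst Q1)" using walk_last[of src dst E u Q1 y] qs(2) by (simp add: simple_path_def)
            then have "y \<in> set (u # map dst Q1)" by (metis last_in_set list.distinct(1))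
            then show ?thesis using qs(4) by blast
          qed
          moreover have "set (u # map dst P1) = set (butlast (u # map dst P1)) \<union> {y}"
            using set_butlast_last[of "u # map dst P1"] yl by simp
          ultimately show ?thesis using fh(5) by blast
        qed
        have sP': "simple_path src dst E u (P1 @ Q2) t" using spP(1) qs(3) dis simple_path_append by metis
        have "length (P1 @ Q2) + length Q'' < length P + length Q" using Q''(3) fh qs Pab Qab by simp
        from less.hyps[OF this uV sP' Q''(1)] obtain tq where tq:
          "simple_path (ttl src) (thd dst) (tE V E src dst) u tq t"
          "set (map (thd dst) tq) \<subseteq> set (map dst (P1 @ Q2)) \<union> set (map dst Q'')"
          "sum_list (map (tcost p) tq) \<le> (\<Sum>e\<in>set (P1 @ Q2) \<inter> set Q''. - ln (1 - p e))"
          "sum_list (map (tweight w D) tq) \<le> (\<Sum>e\<in>set (P1 @ Q2) \<union> set Q''. w e)" by blast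
        have sub1: "set (P1 @ Q2) \<union> set Q'' \<subseteq> set P \<union> set Q" using Q''(2) fh qs Pab Qab by auto
        have sub2: "set (P1 @ Q2) \<inter> set Q'' \<subseteq> set P \<inter> set Q"
        proof
          fix x assume x: "x \<in> set (P1 @ Q2) \<inter> set Q''"
          then have xq: "x \<in> set Qa \<or> x = g \<or> x \<in> set Pb" using Q''(2) by auto
          show "x \<in> set P \<inter> set Q"
          proof (cases "x \<in> set P1")
            case True
            then show ?thesis using xq h1 h2 qs Qab Pab by auto
          next
            case False
            then have "x \<in> set Q2" using x by auto
            then show ?thesis using xq h3 Qab Pab fh qs by auto
          qed
        qed
        have "sum_list (map (tcost p) tq) \<le> (\<Sum>e\<in>set P \<inter> set Q. - ln (1 - p e))"
        proof -
          have "(\<Sum>e\<in>set (P1 @ Q2) \<inter> set Q''. - ln (1 - p e)) \<le> (\<Sum>e\<in>set P \<inter> set Q. - ln (1 - p e))"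
            using sub2 PE cnn by (intro sum_mono_sub) auto
          then show ?thesis using tq(3) by simp
        qed
        moreover have "sum_list (map (tweight w D) tq) \<le> (\<Sum>e\<in>set P \<union> set Q. w e)"
        proof -
          have "(\<Sum>e\<in>set (P1 @ Q2) \<union> set Q''. w e) \<le> (\<Sum>e\<in>set P \<union> set Q. w e)"
            using sub1 PE QE wnn by (intro sum_mono_sub) auto
          then show ?thesis using tq(4) by simp
        qed
        moreover have "set (map (thd dst) tq) \<subseteq> set (map dst P) \<union> set (map dst Q)"
        proof -
          have "set (map dst (P1 @ Q2)) \<union> set (map dst Q'') \<subseteq> dst ` (set (P1 @ Q2) \<union> set Q'')" by auto
          also have "\<dots> \<subseteq> dst ` (set P \<union> set Q)" using sub1 by (rule image_mono)
          finally have "set (map dst (P1 @ Q2)) \<union> set (map dst Q'') \<subseteq> set (map dst P) \<union> set (map dst Q)"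
            by (simp add: image_Un)
          then show ?thesis using tq(2) by (rule_tac subset_trans) 
        qed
        ultimately show ?thesis using tq(1) by blast
      qed
    qed
  qed
qed

definition exc :: "('e \<Rightarrow> 'v) \<Rightarrow> ('e \<Rightarrow> 'v) \<Rightarrow> 'e set \<Rightarrow> 'v \<Rightarrow> int" where
  "exc src dst F x = int (card {e\<in>F. src e = x}) - int (card {e\<in>F. dst e = x})"

lemma exc_insert: "finite F \<Longrightarrow> e \<notin> F \<Longrightarrow> exc src dst (insert e F) x =
   exc src dst F x + (if src e = x then 1 else 0) - (if dst e = x then 1 else 0)"
proof -
  assume f: "finite F" and e: "e \<notin> F"
  have a: "card {e'\<in>insert e F. src e' = x} = card {e'\<in>F. src e' = x} + (if src e = x then 1 else 0)"
  proof (cases "src e = x")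
    case True
    then have "{e'\<in>insert e F. src e' = x} = insert e {e'\<in>F. src e' = x}" by auto
    then show ?thesis using f e True by simp
  next
    case False
    then have "{e'\<in>insert e F. src e' = x} = {e'\<in>F. src e' = x}" by auto
    then show ?thesis using False by simp
  qed
  have b: "card {e'\<in>insert e F. dst e' = x} = card {e'\<in>F. dst e' = x} + (if dst e = x then 1 else 0)"
  proof (cases "dst e = x")
    case True
    then have "{e'\<in>insert e F. dst e' = x} = insert e {e'\<in>F. dst e' = x}" by auto
    then show ?thesis using f e True by simp
  next
    case False
    then have "{e'\<in>insert e F. dst e' = x} = {e'\<in>F. dst e' = x}" by auto
    then show ?thesis using False by simp
  qed
  show ?thesis unfolding exc_def a b by simp
qed

lemma exc_union: "finite F1 \<Longrightarrow> finite F2 \<Longrightarrow> F1 \<inter> F2 = {} \<Longrightarrow>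
  exc src dst (F1 \<union> F2) x = exc src dst F1 x + exc src dst F2 x"
proof -
  assume f: "finite F1" "finite F2" "F1 \<inter> F2 = {}"
  have a: "{e\<in>F1 \<union> F2. src e = x} = {e\<in>F1. src e = x} \<union> {e\<in>F2. src e = x}" by auto
  have b: "{e\<in>F1 \<union> F2. dst e = x} = {e\<in>F1. dst e = x} \<union> {e\<in>F2. dst e = x}" by auto
  have c: "card ({e\<in>F1. src e = x} \<union> {e\<in>F2. src e = x}) = card {e\<in>F1. src e = x} + card {e\<in>F2. src e = x}"
    using f by (intro card_Un_disjoint) auto
  have d: "card ({e\<in>F1. dst e = x} \<union> {e\<in>F2. dst e = x}) = card {e\<in>F1. dst e = x} + card {e\<in>F2. dst e = x}"
    using f by (intro card_Un_disjoint) auto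
  show ?thesis unfolding exc_def a b c d by simp
qed

lemma exc_diff: "finite F \<Longrightarrow> G \<subseteq> F \<Longrightarrow> exc src dst (F - G) x = exc src dst F x - exc src dst G x"
proof -
  assume f: "finite F" "G \<subseteq> F"
  have "F = (F - G) \<union> G" using f by auto
  then have "exc src dst F x = exc src dst (F - G) x + exc src dst G x"
    using f exc_union[of "F - G" G src dst x] by (metis Diff_disjoint finite_Diff inf.commute rev_finite_subset)
  then show ?thesis by simp
qed

lemma exc_trail: "walk src dst E a T b \<Longrightarrow> distinct T \<Longrightarrow>
   exc src dst (set T) x = (if x = a then 1 else 0) - (if x = b then 1 else 0)"
proof (induction T arbitrary: a)
  case Nil then show ?case by (simp add: exc_def)
next
  case (Cons e T)
  then have "exc src dst (set T) x = (if x = dst e then 1 else 0) - (if x = b then 1 else 0)" by auto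
  then show ?case using Cons.prems exc_insert[of "set T" e src dst x] by auto
qed

lemma trail_to_deficit: "finite F \<Longrightarrow> exc src dst F x > 0 \<Longrightarrow>
  \<exists>T y. walk src dst F x T y \<and> distinct T \<and> exc src dst F y < 0"
proof (induction "card F" arbitrary: F x rule: less_induct)
  case less
  have "card {e\<in>F. src e = x} > 0" using less.prems by (simp add: exc_def)
  then obtain e where e: "e \<in> F" "src e = x" by (metis (mono_tags, lifting) card.empty empty_Collect_eq less_irrefl)
  define F' where "F' = F - {e}"
  have fin': "finite F'" using less.prems unfolding F'_def by simp
  have cF: "card F' < card F" using card_Diff1_less[OF _ e(1)] less.prems unfolding F'_def by blast
  have Fi: "F = insert e F'" using e unfolding F'_def by auto
  have eF': "e \<notin> F'" unfolding F'_def by simp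
  have exF: "\<And>z. exc src dst F z = exc src dst F' z + (if src e = z then 1 else 0) - (if dst e = z then 1 else 0)"
  proof -
    fix z
    have "exc src dst (insert e F') z = exc src dst F' z + (if src e = z then 1 else 0) - (if dst e = z then 1 else 0)"
      by (rule exc_insert[OF fin' eF'])
    then show "exc src dst F z = exc src dst F' z + (if src e = z then 1 else 0) - (if dst e = z then 1 else 0)"
      using Fi by simp
  qed
  have F'F: "F' \<subseteq> F" unfolding F'_def by auto
  show ?case
  proof (cases "dst e = x")
    case True
    have "exc src dst F' x = exc src dst F x" using exF[of x] e True by simp
    then have "exc src dst F' x > 0" using less.prems by simp
    from less.hyps[OF cF fin' this] obtain T y where T: "walk src dst F' x T y" "distinct T"
      "exc src dst F' y < 0" by blast
    have "exc src dst F y = exc src dst F' y" using exF[of y] e True by simp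
    then have "exc src dst F y < 0" using T(3) by simp
    moreover have "walk src dst F x T y" using walk_mono[OF T(1) F'F] .
    ultimately show ?thesis using T(2) by (intro exI[of _ T] exI[of _ y]) simp
  next
    case False
    have exd: "exc src dst F (dst e) = exc src dst F' (dst e) - 1" using exF[of "dst e"] e False by simp
    show ?thesis
    proof (cases "exc src dst F (dst e) < 0")
      case True
      have "walk src dst F x [e] (dst e)" using e by simp
      then show ?thesis using True by (intro exI[of _ "[e]"] exI[of _ "dst e"]) simp
    next
      case False2: False
      then have "exc src dst F' (dst e) > 0" using exd by simp
      from less.hyps[OF cF fin' this] obtain T y where T: "walk src dst F' (dst e) T y" "distinct T"
        "exc src dst F' y < 0" by blast
      have yd: "y \<noteq> dst e" using T(3) False2 exd by auto
      have yx: "y \<noteq> x"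
      proof
        assume "y = x"
        then have "exc src dst F' y = exc src dst F x - 1" using exF[of x] e False by simp
        then show False using T(3) less.prems by simp
      qed
      have "exc src dst F y = exc src dst F' y" using exF[of y] e yx yd by simp
      then have "exc src dst F y < 0" using T(3) by simp
      moreover have "walk src dst F x (e # T) y" using e walk_mono[OF T(1) F'F] by simp
      moreover have "distinct (e # T)"
      proof -
        have "set T \<subseteq> F'" using T(1) walk_iff by metis
        then show ?thesis using T(2) eF' by auto
      qed
      ultimately show ?thesis by (intro exI[of _ "e # T"] exI[of _ y]) simp
    qed
  qed
qed

fun rsrc :: "('e \<Rightarrow> 'v) \<Rightarrow> ('e \<Rightarrow> 'v) \<Rightarrow> 'e \<times> bool \<Rightarrow> 'v" where
  "rsrc src dst (e, b) = (if b then src e else dst e)"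
fun rdst :: "('e \<Rightarrow> 'v) \<Rightarrow> ('e \<Rightarrow> 'v) \<Rightarrow> 'e \<times> bool \<Rightarrow> 'v" where
  "rdst src dst (e, b) = (if b then dst e else src e)"

definition resE :: "'e set \<Rightarrow> 'e list \<Rightarrow> ('e \<times> bool) set" where
  "resE H P0 = (\<lambda>e. (e, True)) ` (H - set P0) \<union> (\<lambda>e. (e, False)) ` set P0"

lemma exit_exists: "walk src dst E a W b \<Longrightarrow> a \<in> X \<Longrightarrow> b \<notin> X \<Longrightarrow> \<exists>g\<in>set W. src g \<in> X \<and> dst g \<notin> X"
  by (induction W arbitrary: a) auto

lemma enter_exists: "walk src dst E a W b \<Longrightarrow> a \<notin> X \<Longrightarrow> b \<in> X \<Longrightarrow> \<exists>g\<in>set W. src g \<notin> X \<and> dst g \<in> X"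
  by (induction W arbitrary: a) auto

lemma menger2:
  assumes fin: "finite H"
    and A: "walk src dst H u A v" and B: "walk src dst H u B v" and AB: "set A \<inter> set B = {}"
    and C: "walk src dst H v C w" and D: "walk src dst H v D w" and CD: "set C \<inter> set D = {}"
  shows "\<exists>P Q. simple_path src dst H u P w \<and> simple_path src dst H u Q w \<and> set P \<inter> set Q = {}"
proof (cases "u = w")
  case True then show ?thesis by (intro exI[of _ "[]"]) auto
next
  case uw: False
  have "walk src dst H u (A @ C) w" using A C by (auto simp: walk_append)
  then obtain P0 where P0: "simple_path src dst H u P0 w" using shortcut[of src dst H u "A @ C" w] by blast
  have P0H: "set P0 \<subseteq> H" using P0 by (auto simp: simple_path_def walk_iff[of src dst H])
  have dP0: "distinct P0" using P0 simple_path_distinct by metis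
  let ?R = "resE H P0"
  let ?X = "{x. \<exists>\<rho>. walk (rsrc src dst) (rdst src dst) ?R u \<rho> x}"
  show ?thesis
  proof (cases "w \<in> ?X")
    case True
    then obtain \<rho>0 where "walk (rsrc src dst) (rdst src dst) ?R u \<rho>0 w" by auto
    from shortcut[OF this] obtain \<rho> where \<rho>: "simple_path (rsrc src dst) (rdst src dst) ?R u \<rho> w" by blast
    have d\<rho>: "distinct \<rho>" using \<rho> simple_path_distinct by metis
    have w\<rho>: "walk (rsrc src dst) (rdst src dst) ?R u \<rho> w" using \<rho> by (simp add: simple_path_def)
    have \<rho>R: "set \<rho> \<subseteq> ?R" using w\<rho> walk_iff by metis
    define Fw where "Fw = {e. (e, True) \<in> set \<rho>}"
    define Bk where "Bk = {e. (e, False) \<in> set \<rho>}"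
    have FwH: "Fw \<subseteq> H - set P0" using \<rho>R unfolding Fw_def resE_def by auto
    have BkP: "Bk \<subseteq> set P0" using \<rho>R unfolding Bk_def resE_def by auto
    have finFw: "finite Fw" using FwH fin by (meson finite_Diff rev_finite_subset)
    have finBk: "finite Bk" using BkP by (meson finite_set rev_finite_subset)
    define F where "F = (set P0 - Bk) \<union> Fw"
    have finF: "finite F" unfolding F_def using finFw by simp
    have FH: "F \<subseteq> H" unfolding F_def using FwH P0H by auto
    have exR: "\<And>x. exc (rsrc src dst) (rdst src dst) (set \<rho>) x = exc src dst Fw x - exc src dst Bk x"
    proof -
      fix x
      have s1: "{r\<in>set \<rho>. rsrc src dst r = x} = (\<lambda>e. (e, True)) ` {e\<in>Fw. src e = x} \<union> (\<lambda>e. (e, False)) ` {e\<in>Bk. dst e = x}"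
      proof (rule set_eqI)
        fix r
        show "r \<in> {r\<in>set \<rho>. rsrc src dst r = x} \<longleftrightarrow> r \<in> (\<lambda>e. (e, True)) ` {e\<in>Fw. src e = x} \<union> (\<lambda>e. (e, False)) ` {e\<in>Bk. dst e = x}"
          by (cases r) (auto simp: Fw_def Bk_def split: if_splits)
      qed
      have s2: "{r\<in>set \<rho>. rdst src dst r = x} = (\<lambda>e. (e, True)) ` {e\<in>Fw. dst e = x} \<union> (\<lambda>e. (e, False)) ` {e\<in>Bk. src e = x}"
      proof (rule set_eqI)
        fix r
        show "r \<in> {r\<in>set \<rho>. rdst src dst r = x} \<longleftrightarrow> r \<in> (\<lambda>e. (e, True)) ` {e\<in>Fw. dst e = x} \<union> (\<lambda>e. (e, False)) ` {e\<in>Bk. src e = x}"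
          by (cases r) (auto simp: Fw_def Bk_def split: if_splits)
      qed
      have c1: "card {r\<in>set \<rho>. rsrc src dst r = x} = card {e\<in>Fw. src e = x} + card {e\<in>Bk. dst e = x}"
        unfolding s1 by (subst card_Un_disjoint) (auto simp: card_image inj_on_def finFw finBk)
      have c2: "card {r\<in>set \<rho>. rdst src dst r = x} = card {e\<in>Fw. dst e = x} + card {e\<in>Bk. src e = x}"
        unfolding s2 by (subst card_Un_disjoint) (auto simp: card_image inj_on_def finFw finBk)
      show "exc (rsrc src dst) (rdst src dst) (set \<rho>) x = exc src dst Fw x - exc src dst Bk x"
        unfolding exc_def c1 c2 by simp
    qed
    have exF: "\<And>x. exc src dst F x = 2 * ((if x = u then 1 else 0) - (if x = w then 1 else 0))"
    proof -
      fix x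
      have "exc src dst F x = exc src dst (set P0 - Bk) x + exc src dst Fw x"
        unfolding F_def using finFw FwH by (intro exc_union) auto
      also have "\<dots> = exc src dst (set P0) x - exc src dst Bk x + exc src dst Fw x"
        using BkP by (simp add: exc_diff)
      also have "\<dots> = exc src dst (set P0) x + exc (rsrc src dst) (rdst src dst) (set \<rho>) x"
        using exR by simp
      also have "\<dots> = 2 * ((if x = u then 1 else 0) - (if x = w then 1 else 0))"
        using exc_trail[OF w\<rho> d\<rho>, of x] exc_trail[of src dst H u P0 w, OF _ dP0, of x] P0
        by (simp add: simple_path_def)
      finally show "exc src dst F x = 2 * ((if x = u then 1 else 0) - (if x = w then 1 else 0))" .
    qed
    have "exc src dst F u > 0" using exF[of u] uw by simp
    from trail_to_deficit[OF finF this] obtain T1 y where T1: "walk src dst F u T1 y" "distinct T1"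
      "exc src dst F y < 0" by blast
    have yw: "y = w" using T1(3) exF[of y] by (cases "y = u"; cases "y = w") auto
    have T1F: "set T1 \<subseteq> F" using T1(1) walk_iff by metis
    define F1 where "F1 = F - set T1"
    have finF1: "finite F1" unfolding F1_def using finF by simp
    have exF1: "\<And>x. exc src dst F1 x = (if x = u then 1 else 0) - (if x = w then 1 else 0)"
    proof -
      fix x
      have "exc src dst F1 x = exc src dst F x - exc src dst (set T1) x" unfolding F1_def by (rule exc_diff[OF finF T1F])
      then show "exc src dst F1 x = (if x = u then 1 else 0) - (if x = w then 1 else 0)"
        using exF[of x] exc_trail[OF T1(1) T1(2), of x] yw by simp
    qed
    have "exc src dst F1 u > 0" using exF1[of u] uw by simp
    from trail_to_deficit[OF finF1 this] obtain T2 y2 where T2: "walk src dst F1 u T2 y2"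
      "exc src dst F1 y2 < 0" by blast
    have y2w: "y2 = w" using T2(2) exF1[of y2] by (cases "y2 = u"; cases "y2 = w") auto
    have T2F: "set T2 \<subseteq> F1" using T2(1) walk_iff by metis
    have w1: "walk src dst H u T1 w" using walk_mono[OF T1(1) FH] yw by simp
    have w2: "walk src dst H u T2 w" using walk_mono[OF T2(1)] FH y2w unfolding F1_def by auto
    obtain P where P: "simple_path src dst H u P w" "set P \<subseteq> set T1" using shortcut[OF w1] by blast
    obtain Q where Q: "simple_path src dst H u Q w" "set Q \<subseteq> set T2" using shortcut[OF w2] by blast
    have "set P \<inter> set Q = {}" using P(2) Q(2) T2F unfolding F1_def by auto
    then show ?thesis using P Q by blast
  next
    case False
    have uX: "u \<in> ?X" by (auto intro: exI[of _ "[]"])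
    have cl1: "\<And>e. e \<in> H \<Longrightarrow> e \<notin> set P0 \<Longrightarrow> src e \<in> ?X \<Longrightarrow> dst e \<in> ?X"
    proof -
      fix e assume e: "e \<in> H" "e \<notin> set P0" "src e \<in> ?X"
      then obtain \<rho> where "walk (rsrc src dst) (rdst src dst) ?R u \<rho> (src e)" by auto
      moreover have "(e, True) \<in> ?R" using e unfolding resE_def by auto
      ultimately have "walk (rsrc src dst) (rdst src dst) ?R u (\<rho> @ [(e, True)]) (dst e)"
        by (auto simp: walk_append)
      then show "dst e \<in> ?X" by blast
    qed
    have cl2: "\<And>e. e \<in> set P0 \<Longrightarrow> dst e \<in> ?X \<Longrightarrow> src e \<in> ?X"
    proof -
      fix e assume e: "e \<in> set P0" "dst e \<in> ?X"
      then obtain \<rho> where "walk (rsrc src dst) (rdst src dst) ?R u \<rho> (dst e)" by auto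
      moreover have "(e, False) \<in> ?R" using e unfolding resE_def by auto
      ultimately have "walk (rsrc src dst) (rdst src dst) ?R u (\<rho> @ [(e, False)]) (src e)"
        by (auto simp: walk_append)
      then show "src e \<in> ?X" by blast
    qed
    have noenter: "\<And>a W b. walk src dst UNIV a W b \<Longrightarrow> set W \<subseteq> set P0 \<Longrightarrow> a \<notin> ?X \<Longrightarrow> b \<in> ?X \<Longrightarrow> False"
    proof -
      fix a W b assume h: "walk src dst UNIV a W b" "set W \<subseteq> set P0" "a \<notin> ?X" "b \<in> ?X"
      from enter_exists[OF h(1), of ?X] h(3,4) obtain g where "g \<in> set W" "src g \<notin> ?X" "dst g \<in> ?X"
        by blast
      then show False using cl2 h(2) by blast
    qed
    have exitP0: "\<And>g. g \<in> H \<Longrightarrow> src g \<in> ?X \<Longrightarrow> dst g \<notin> ?X \<Longrightarrow> g \<in> set P0" using cl1 by blast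
    have wP0: "walk src dst UNIV u P0 w" using P0 by (simp add: simple_path_def walk_iff[of src dst H])
    have uniq: "\<And>g1 g2. g1 \<in> set P0 \<Longrightarrow> g2 \<in> set P0 \<Longrightarrow> src g1 \<in> ?X \<Longrightarrow> dst g1 \<notin> ?X \<Longrightarrow>
        src g2 \<in> ?X \<Longrightarrow> dst g2 \<notin> ?X \<Longrightarrow> g1 = g2"
    proof (rule ccontr)
      fix g1 g2 assume g: "g1 \<in> set P0" "g2 \<in> set P0" "src g1 \<in> ?X" "dst g1 \<notin> ?X"
        "src g2 \<in> ?X" "dst g2 \<notin> ?X" "g1 \<noteq> g2"
      obtain \<alpha> \<beta> where ab: "P0 = \<alpha> @ g1 # \<beta>" using split_list[OF g(1)] by blast
      have "g2 \<in> set \<alpha> \<or> g2 \<in> set \<beta>" using g ab by auto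
      then show False
      proof
        assume "g2 \<in> set \<alpha>"
        then obtain \<alpha>1 \<alpha>2 where a12: "\<alpha> = \<alpha>1 @ g2 # \<alpha>2" using split_list by metis
        have "walk src dst UNIV (dst g2) \<alpha>2 (src g1)" using wP0 ab a12 by (auto simp: walk_append)
        then show False using noenter g ab a12 by auto
      next
        assume "g2 \<in> set \<beta>"
        then obtain \<beta>1 \<beta>2 where b12: "\<beta> = \<beta>1 @ g2 # \<beta>2" using split_list by metis
        have "walk src dst UNIV (dst g1) \<beta>1 (src g2)" using wP0 ab b12 by (auto simp: walk_append)
        then show False using noenter g ab b12 by auto
      qed
    qed
    have twoexit: "\<And>a b W1 W2. walk src dst H a W1 b \<Longrightarrow> walk src dst H a W2 b \<Longrightarrow> set W1 \<inter> set W2 = {} \<Longrightarrow>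
       a \<in> ?X \<Longrightarrow> b \<notin> ?X \<Longrightarrow> False"
    proof -
      fix a b W1 W2 assume h: "walk src dst H a W1 b" "walk src dst H a W2 b" "set W1 \<inter> set W2 = {}"
        "a \<in> ?X" "b \<notin> ?X"
      obtain g1 where g1: "g1 \<in> set W1" "src g1 \<in> ?X" "dst g1 \<notin> ?X" using exit_exists[OF h(1) h(4) h(5)] by blast
      obtain g2 where g2: "g2 \<in> set W2" "src g2 \<in> ?X" "dst g2 \<notin> ?X" using exit_exists[OF h(2) h(4) h(5)] by blast
      have "set W1 \<subseteq> H" "set W2 \<subseteq> H" using h(1,2) walk_iff by metis+
      then have "g1 \<in> H" "g2 \<in> H" using g1 g2 by auto
      then have "g1 \<in> set P0" "g2 \<in> set P0" using exitP0 g1 g2 by auto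
      then have "g1 = g2" using uniq g1 g2 by blast
      then show False using g1 g2 h(3) by auto
    qed
    show ?thesis
    proof (cases "v \<in> ?X")
      case True
      then show ?thesis using twoexit[OF C D CD True] False by blast
    next
      case vX: False
      then show ?thesis using twoexit[OF A B AB uX vX] by blast
    qed
  qed
qed

lemma walk_map_lift: "(\<forall>x\<in>set xs. fst (f x) = x) \<Longrightarrow> walk src dst UNIV u xs v \<Longrightarrow>
   walk (\<lambda>r. src (fst r)) (\<lambda>r. dst (fst r)) UNIV u (map f xs) v"
  by (induction xs arbitrary: u) auto

lemma walk_map_proj: "walk (\<lambda>r. src (fst r)) (\<lambda>r. dst (fst r)) UNIV u xs v \<Longrightarrow>
   walk src dst UNIV u (map fst xs) v"
  by (induction xs arbitrary: u) auto

lemma mfront: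
  assumes A: "walk src dst E u A v" and B: "walk src dst E u B v" and AB: "set A \<inter> set B = {}"
    and C: "walk src dst E v C w" and D: "walk src dst E v D w" and CD: "set C \<inter> set D \<subseteq> K"
  shows "\<exists>P Q. simple_path src dst E u P w \<and> simple_path src dst E u Q w \<and> set P \<inter> set Q \<subseteq> K \<and>
     set P \<union> set Q \<subseteq> set A \<union> set B \<union> set C \<union> set D"
proof -
  let ?ls = "\<lambda>r. src (fst r)" and ?ld = "\<lambda>r. dst (fst r)"
  define A' where "A' = map (\<lambda>e. (e, False)) A"
  define B' where "B' = map (\<lambda>e. (e, False)) B"
  define C' where "C' = map (\<lambda>e. (e, False)) C"
  define D' where "D' = map (\<lambda>e. (e, e \<in> set C)) D"
  define H where "H = set A' \<union> set B' \<union> set C' \<union> set D'"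
  have wu: "\<And>a xs b. walk src dst E a xs b \<Longrightarrow> walk src dst UNIV a xs b" using walk_iff by metis
  have lift: "\<And>a xs b f. walk src dst E a xs b \<Longrightarrow> (\<forall>x\<in>set xs. fst (f x) = x) \<Longrightarrow> set (map f xs) \<subseteq> H \<Longrightarrow>
      walk ?ls ?ld H a (map f xs) b"
    using walk_map_lift wu walk_iff by metis
  have wA: "walk ?ls ?ld H u A' v" unfolding A'_def by (rule lift[OF A]) (auto simp: H_def A'_def)
  have wB: "walk ?ls ?ld H u B' v" unfolding B'_def by (rule lift[OF B]) (auto simp: H_def B'_def)
  have wC: "walk ?ls ?ld H v C' w" unfolding C'_def by (rule lift[OF C]) (auto simp: H_def C'_def)
  have wD: "walk ?ls ?ld H v D' w" unfolding D'_def by (rule lift[OF D]) (auto simp: H_def D'_def)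
  have dAB: "set A' \<inter> set B' = {}" using AB unfolding A'_def B'_def by auto
  have dCD: "set C' \<inter> set D' = {}" unfolding C'_def D'_def by auto
  have finH: "finite H" unfolding H_def by simp
  from menger2[OF finH wA wB dAB wC wD dCD] obtain P' Q' where PQ:
    "simple_path ?ls ?ld H u P' w" "simple_path ?ls ?ld H u Q' w" "set P' \<inter> set Q' = {}" by blast
  have fH: "fst ` H \<subseteq> set A \<union> set B \<union> set C \<union> set D"
    unfolding H_def A'_def B'_def C'_def D'_def by auto
  have EE: "set A \<union> set B \<union> set C \<union> set D \<subseteq> E" using A B C D walk_iff by (metis Un_least)
  have proj: "\<And>X. simple_path ?ls ?ld H u X w \<Longrightarrow> simple_path src dst E u (map fst X) w \<and>
      set (map fst X) \<subseteq> set A \<union> set B \<union> set C \<union> set D"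
  proof -
    fix X assume X: "simple_path ?ls ?ld H u X w"
    have XH: "set X \<subseteq> H" using X walk_iff unfolding simple_path_def by metis
    then have s: "set (map fst X) \<subseteq> set A \<union> set B \<union> set C \<union> set D" using fH by auto
    have "walk src dst UNIV u (map fst X) w" using X walk_map_proj walk_iff unfolding simple_path_def by metis
    then have "walk src dst E u (map fst X) w" using s EE walk_iff by (metis subset_trans)
    moreover have "distinct (u # map dst (map fst X))" using X unfolding simple_path_def by (simp add: comp_def)
    ultimately show "simple_path src dst E u (map fst X) w \<and> set (map fst X) \<subseteq> set A \<union> set B \<union> set C \<union> set D"
      using s by (simp add: simple_path_def)
  qed
  have "set (map fst P') \<inter> set (map fst Q') \<subseteq> K"
  proof
    fix e assume "e \<in> set (map fst P') \<inter> set (map fst Q')"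
    then obtain b1 b2 where b: "(e, b1) \<in> set P'" "(e, b2) \<in> set Q'" by auto
    then have "b1 \<noteq> b2" using PQ(3) by auto
    then have "(e, True) \<in> set P' \<union> set Q'" using b by (cases b1) auto
    moreover have "set P' \<union> set Q' \<subseteq> H" using PQ walk_iff unfolding simple_path_def by (metis Un_least)
    ultimately have "(e, True) \<in> H" by auto
    then have "e \<in> set C \<and> e \<in> set D" unfolding H_def A'_def B'_def C'_def D'_def by auto
    then show "e \<in> K" using CD by auto
  qed
  then show ?thesis using proj[OF PQ(1)] proj[OF PQ(2)] by blast
qed

fun seg1 :: "('v \<Rightarrow> 'v \<Rightarrow> 'e list \<times> 'e list) \<Rightarrow> ('v, 'e) tlink \<Rightarrow> 'e list" where
  "seg1 D (SimpleL e) = [e]"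
| "seg1 D (DisjL u v) = fst (D u v)"
fun seg2 :: "('v \<Rightarrow> 'v \<Rightarrow> 'e list \<times> 'e list) \<Rightarrow> ('v, 'e) tlink \<Rightarrow> 'e list" where
  "seg2 D (SimpleL e) = [e]"
| "seg2 D (DisjL u v) = snd (D u v)"
fun segT :: "('v, 'e) tlink \<Rightarrow> 'e list" where
  "segT (SimpleL e) = [e]"
| "segT (DisjL u v) = []"

lemma disjL_pair: "edspop_choice V E src dst w D \<Longrightarrow> DisjL a b \<in> tE V E src dst \<Longrightarrow> disj_pair src dst E a b (D a b)"
  unfolding edspop_choice_def tE_def by auto

lemma chain:
  assumes D: "edspop_choice V E src dst w D"
  shows "walk (ttl src) (thd dst) (tE V E src dst) u tp t \<Longrightarrow>
    \<exists>P Q. simple_path src dst E u P t \<and> simple_path src dst E u Q t \<and>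
      set P \<inter> set Q \<subseteq> set (concat (map segT tp)) \<and>
      set P \<union> set Q \<subseteq> set (concat (map (seg1 D) tp)) \<union> set (concat (map (seg2 D) tp))"
proof (induction tp arbitrary: u)
  case Nil then show ?case by (intro exI[of _ "[]"]) auto
next
  case (Cons l tp)
  then have lE: "l \<in> tE V E src dst" and lu: "ttl src l = u" and wt: "walk (ttl src) (thd dst) (tE V E src dst) (thd dst l) tp t"
    by auto
  from Cons.IH[OF wt] obtain P Q where PQ: "simple_path src dst E (thd dst l) P t" "simple_path src dst E (thd dst l) Q t"
    "set P \<inter> set Q \<subseteq> set (concat (map segT tp))"
    "set P \<union> set Q \<subseteq> set (concat (map (seg1 D) tp)) \<union> set (concat (map (seg2 D) tp))" by blast
  show ?case
  proof (cases l)
    case (SimpleL e)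
    have eE: "e \<in> E" using lE SimpleL unfolding tE_def by auto
    have w1: "walk src dst E u (e # P) t" using PQ(1) eE lu SimpleL by (simp add: simple_path_def)
    have w2: "walk src dst E u (e # Q) t" using PQ(2) eE lu SimpleL by (simp add: simple_path_def)
    obtain P1 where P1: "simple_path src dst E u P1 t" "set P1 \<subseteq> set (e # P)" using shortcut[OF w1] by blast
    obtain Q1 where Q1: "simple_path src dst E u Q1 t" "set Q1 \<subseteq> set (e # Q)" using shortcut[OF w2] by blast
    have "set P1 \<inter> set Q1 \<subseteq> set (concat (map segT (l # tp)))" using P1(2) Q1(2) PQ(3) SimpleL by auto
    moreover have "set P1 \<union> set Q1 \<subseteq> set (concat (map (seg1 D) (l # tp))) \<union> set (concat (map (seg2 D) (l # tp)))"
      using P1(2) Q1(2) PQ(4) SimpleL by auto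
    ultimately show ?thesis using P1(1) Q1(1) by blast
  next
    case (DisjL a b)
    have "disj_pair src dst E a b (D a b)" using disjL_pair[OF D] lE DisjL by simp
    then have dp: "simple_path src dst E u (fst (D a b)) b" "simple_path src dst E u (snd (D a b)) b"
      "set (fst (D a b)) \<inter> set (snd (D a b)) = {}" using lu DisjL unfolding disj_pair_def by auto
    have wa: "walk src dst E u (fst (D a b)) b" "walk src dst E u (snd (D a b)) b"
      using dp by (auto simp: simple_path_def)
    have wc: "walk src dst E b P t" "walk src dst E b Q t" using PQ DisjL by (auto simp: simple_path_def)
    from mfront[OF wa(1) wa(2) dp(3) wc(1) wc(2) PQ(3)] obtain P1 Q1 where
      R: "simple_path src dst E u P1 t" "simple_path src dst E u Q1 t" "set P1 \<inter> set Q1 \<subseteq> set (concat (map segT tp))"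
      "set P1 \<union> set Q1 \<subseteq> set (fst (D a b)) \<union> set (snd (D a b)) \<union> set P \<union> set Q" by blast
    have "set P1 \<inter> set Q1 \<subseteq> set (concat (map segT (l # tp)))" using R(3) DisjL by simp
    moreover have "set P1 \<union> set Q1 \<subseteq> set (concat (map (seg1 D) (l # tp))) \<union> set (concat (map (seg2 D) (l # tp)))"
      using R(4) PQ(4) DisjL by auto
    ultimately show ?thesis using R(1,2) by blast
  qed
qed

lemma sum_list_count_real: "set xs \<subseteq> X \<Longrightarrow> finite X \<Longrightarrow>
  sum_list (map f xs) = (\<Sum>x\<in>X. real (count_list xs x) * (f x :: real))"
proof (induction xs)
  case Nil then show ?case by simp
next
  case (Cons a xs)
  have "(\<Sum>x\<in>X. real (count_list (a # xs) x) * f x) = (\<Sum>x\<in>X. real (count_list xs x) * f x + (if a = x then f x else 0))"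
    by (intro sum.cong) (auto simp: algebra_simps)
  also have "\<dots> = (\<Sum>x\<in>X. real (count_list xs x) * f x) + f a"
    using Cons.prems by (simp add: sum.distrib)
  finally show ?case using Cons by simp
qed

lemma distinct_count: "(\<forall>e. count_list xs e \<le> 1) \<Longrightarrow> distinct xs"
proof (induction xs)
  case Nil then show ?case by simp
next
  case (Cons a xs)
  have "count_list xs a = 0" using Cons.prems[rule_format, of a] by simp
  then have "a \<notin> set xs" by (simp add: count_list_0_iff)
  moreover have "\<forall>e. count_list xs e \<le> 1" using Cons.prems by (metis count_list.simps(2) le_SucI le_add1 le_trans)
  ultimately show ?case using Cons.IH by simp
qed

lemma walk_nth_src: "walk src dst E a xs b \<Longrightarrow> k < length xs \<Longrightarrow> src (xs ! k) = (a # map dst xs) ! k"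
proof (induction xs arbitrary: a k)
  case Nil then show ?case by simp
next
  case (Cons e xs)
  then show ?case by (cases k) auto
qed

lemma sum_set_le_list: "(\<forall>x\<in>set xs. 0 \<le> (f x :: real)) \<Longrightarrow> sum f (set xs) \<le> sum_list (map f xs)"
proof (induction xs)
  case Nil then show ?case by simp
next
  case (Cons a xs)
  have "sum f (set (a # xs)) \<le> f a + sum f (set xs)"
    by (cases "a \<in> set xs") (auto simp: insert_absorb Cons.prems sum.insert)
  then show ?case using Cons by simp
qed

lemma loop_decomp: "walk src dst E a xs b \<Longrightarrow> \<not> distinct (a # map dst xs) \<Longrightarrow>
  \<exists>\<alpha> \<gamma> \<beta> z. xs = \<alpha> @ \<gamma> @ \<beta> \<and> \<gamma> \<noteq> [] \<and> walk src dst E a \<alpha> z \<and> walk src dst E z \<gamma> z \<and> walk src dst E z \<beta> b"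
proof (induction xs arbitrary: a)
  case Nil then show ?case by simp
next
  case (Cons e xs)
  have ee: "e \<in> E" "src e = a" and wx: "walk src dst E (dst e) xs b" using Cons.prems by auto
  show ?case
  proof (cases "a \<in> set (dst e # map dst xs)")
    case True
    show ?thesis
    proof (cases "a = dst e")
      case True
      then show ?thesis using ee wx by (intro exI[of _ "[]"] exI[of _ "[e]"] exI[of _ xs] exI[of _ a]) auto
    next
      case False
      then have "a \<in> set (dst e # map dst xs)" using True by simp
      from walk_split[OF wx this] obtain ys1 ys2 where "xs = ys1 @ ys2" "walk src dst E (dst e) ys1 a"
        "walk src dst E a ys2 b" by blast
      then show ?thesis using ee by (intro exI[of _ "[]"] exI[of _ "e # ys1"] exI[of _ ys2] exI[of _ a]) auto
    qed
  next
    case False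
    then have "\<not> distinct (dst e # map dst xs)" using Cons.prems by simp
    from Cons.IH[OF wx this] obtain \<alpha> \<gamma> \<beta> z where h: "xs = \<alpha> @ \<gamma> @ \<beta>" "\<gamma> \<noteq> []"
      "walk src dst E (dst e) \<alpha> z" "walk src dst E z \<gamma> z" "walk src dst E z \<beta> b" by blast
    then show ?thesis using ee by (intro exI[of _ "e # \<alpha>"] exI[of _ \<gamma>] exI[of _ \<beta>] exI[of _ z]) auto
  qed
qed

lemma surv_ge: "finite A \<Longrightarrow> (\<forall>e\<in>A. 0 < 1 - (p :: _ \<Rightarrow> real) e) \<Longrightarrow> 0 < S \<Longrightarrow>
   (\<Sum>e\<in>A. - ln (1 - p e)) \<le> - ln S \<Longrightarrow> S \<le> (\<Prod>e\<in>A. 1 - p e)"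
proof -
  assume h: "finite A" "\<forall>e\<in>A. 0 < 1 - p e" "0 < S" "(\<Sum>e\<in>A. - ln (1 - p e)) \<le> - ln S"
  have pp: "0 < (\<Prod>e\<in>A. 1 - p e)" using h(2) by (intro prod_pos) auto
  have "ln (\<Prod>e\<in>A. 1 - p e) = (\<Sum>e\<in>A. ln (1 - p e))" using h(1,2) by (intro ln_prod) auto
  also have "\<dots> = - (\<Sum>e\<in>A. - ln (1 - p e))" by (simp add: sum_negf)
  finally have "ln S \<le> ln (\<Prod>e\<in>A. 1 - p e)" using h(4) by simp
  then show ?thesis using pp h(3) by simp
qed

lemma surv_le: "finite A \<Longrightarrow> (\<forall>e\<in>A. 0 < 1 - (p :: _ \<Rightarrow> real) e) \<Longrightarrow> 0 < S \<Longrightarrow>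
   S \<le> (\<Prod>e\<in>A. 1 - p e) \<Longrightarrow> (\<Sum>e\<in>A. - ln (1 - p e)) \<le> - ln S"
proof -
  assume h: "finite A" "\<forall>e\<in>A. 0 < 1 - p e" "0 < S" "S \<le> (\<Prod>e\<in>A. 1 - p e)"
  have pp: "0 < (\<Prod>e\<in>A. 1 - p e)" using h(2) by (intro prod_pos) auto
  have "ln (\<Prod>e\<in>A. 1 - p e) = (\<Sum>e\<in>A. ln (1 - p e))" using h(1,2) by (intro ln_prod) auto
  also have "\<dots> = - (\<Sum>e\<in>A. - ln (1 - p e))" by (simp add: sum_negf)
  finally have "ln S \<le> - (\<Sum>e\<in>A. - ln (1 - p e))" using h(3,4) pp by (metis ln_le_cancel_iff)
  then show ?thesis by simp
qed

lemma part1_seg1: "part1 D l = set (seg1 D l)" by (cases l) auto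
lemma part2_seg2: "part2 D l = set (seg2 D l)" by (cases l) auto

lemma build_eq: "build D tp = (set (concat (map (seg1 D) tp)), set (concat (map (seg2 D) tp)))"
  unfolding build_def by (simp add: part1_seg1 part2_seg2)

lemma tcost_segT: "sum_list (map (tcost p) tp) = sum_list (map (\<lambda>e. - ln (1 - p e)) (concat (map segT tp)))"
proof (induction tp)
  case Nil then show ?case by simp
next
  case (Cons l tp) then show ?case by (cases l) auto
qed

lemma count_segT: "count_list (concat (map segT tp)) e \<le> count_list (concat (map (seg1 D) tp)) e \<and>
    count_list (concat (map segT tp)) e \<le> count_list (concat (map (seg2 D) tp)) e"
proof (induction tp)
  case Nil then show ?case by simp
next
  case (Cons l tp) then show ?case by (cases l) auto
qed

locale netctx =
  fixes V :: "'v set" and E :: "'e set" and src dst :: "'e \<Rightarrow> 'v" and p w :: "'e \<Rightarrow> real"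
    and pmax S :: real and s t :: 'v and D :: "'v \<Rightarrow> 'v \<Rightarrow> 'e list \<times> 'e list"
  assumes net: "network V E src dst p pmax w" and sV: "s \<in> V" and Spos: "0 < S"
    and D: "edspop_choice V E src dst w D"
begin

lemma finE: "finite E" using net unfolding network_def by simp
lemma Vc: "\<forall>e\<in>E. src e \<in> V \<and> dst e \<in> V" using net unfolding network_def by simp
lemma p01: "e \<in> E \<Longrightarrow> 0 < p e \<and> p e < 1" using net unfolding network_def by force
lemma wpos: "e \<in> E \<Longrightarrow> 0 < w e" using net unfolding network_def by force
lemma cpos: "e \<in> E \<Longrightarrow> 0 < - ln (1 - p e)"
proof -
  assume "e \<in> E"
  then have "0 < 1 - p e" "1 - p e < 1" using p01 by auto
  then show ?thesis by simp
qed

lemma M1: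
  assumes "feasible_conn src dst E p s t S \<pi>1 \<pi>2"
  shows "\<exists>tq. rsp_feasible V E src dst p s t S tq \<and> sum_list (map (tweight w D) tq) \<le> W_CO w \<pi>1 \<pi>2"
proof -
  obtain P Q where PQ: "simple_path src dst E s P t" "simple_path src dst E s Q t" "\<pi>1 = set P" "\<pi>2 = set Q"
    using assms unfolding feasible_conn_def paths_def by auto
  have sl: "S \<le> (\<Prod>e\<in>set P \<inter> set Q. 1 - p e)" using assms PQ unfolding feasible_conn_def surv_level_def by simp
  have PE: "set P \<subseteq> E" using PQ simple_path_edges by metis
  have cs: "(\<Sum>e\<in>set P \<inter> set Q. - ln (1 - p e)) \<le> - ln S"
    using surv_le[of "set P \<inter> set Q" p S] sl Spos PE p01 by force
  have cnn: "\<forall>e\<in>E. 0 \<le> - ln (1 - p e)" using cpos by (simp add: less_imp_le)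
  have wnn: "\<forall>e\<in>E. 0 \<le> w e" using wpos by (simp add: less_imp_le)
  from lemA[OF Vc cnn wnn D sV PQ(1) PQ(2)] obtain tq where tq:
    "simple_path (ttl src) (thd dst) (tE V E src dst) s tq t"
    "sum_list (map (tcost p) tq) \<le> (\<Sum>e\<in>set P \<inter> set Q. - ln (1 - p e))"
    "sum_list (map (tweight w D) tq) \<le> (\<Sum>e\<in>set P \<union> set Q. w e)" by blast
  have "rsp_feasible V E src dst p s t S tq" unfolding rsp_feasible_def using tq cs by simp
  moreover have "sum_list (map (tweight w D) tq) \<le> W_CO w \<pi>1 \<pi>2" unfolding W_CO_def using tq PQ by simp
  ultimately show ?thesis by blast
qed

lemma pairfeas:
  assumes "simple_path src dst E s P t" "simple_path src dst E s Q t"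
    "(\<Sum>e\<in>set P \<inter> set Q. - ln (1 - p e)) \<le> - ln S"
  shows "feasible_conn src dst E p s t S (set P) (set Q)"
proof -
  have PE: "set P \<subseteq> E" using assms simple_path_edges by metis
  have "S \<le> (\<Prod>e\<in>set P \<inter> set Q. 1 - p e)" using surv_ge[of "set P \<inter> set Q" p S] assms(3) Spos PE p01 by force
  then show ?thesis using assms unfolding feasible_conn_def paths_def surv_level_def by auto
qed

lemma walks_seg: "walk (ttl src) (thd dst) (tE V E src dst) u tp v \<Longrightarrow>
  walk src dst E u (concat (map (seg1 D) tp)) v \<and> walk src dst E u (concat (map (seg2 D) tp)) v"
proof (induction tp arbitrary: u)
  case Nil then show ?case by simp
next
  case (Cons l tp)
  then have lE: "l \<in> tE V E src dst" and lu: "ttl src l = u"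
    and IH: "walk src dst E (thd dst l) (concat (map (seg1 D) tp)) v \<and> walk src dst E (thd dst l) (concat (map (seg2 D) tp)) v"
    by auto
  show ?case
  proof (cases l)
    case (SimpleL e)
    then have "e \<in> E" using lE unfolding tE_def by auto
    then show ?thesis using IH lu SimpleL by simp
  next
    case (DisjL a b)
    have "disj_pair src dst E a b (D a b)" using disjL_pair[OF D] lE DisjL by simp
    then have "walk src dst E a (fst (D a b)) b" "walk src dst E a (snd (D a b)) b"
      unfolding disj_pair_def simple_path_def by auto
    then show ?thesis using IH lu DisjL by (auto simp: walk_append)
  qed
qed

lemma weight_seg: "walk (ttl src) (thd dst) (tE V E src dst) u tp v \<Longrightarrow>
  sum_list (map (tweight w D) tp) = sum_list (map w (concat (map (seg1 D) tp))) + sum_list (map w (concat (map (seg2 D) tp)))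
     - sum_list (map w (concat (map segT tp)))"
proof (induction tp arbitrary: u)
  case Nil then show ?case by simp
next
  case (Cons l tp)
  then have lE: "l \<in> tE V E src dst" and IH: "sum_list (map (tweight w D) tp) = sum_list (map w (concat (map (seg1 D) tp))) + sum_list (map w (concat (map (seg2 D) tp)))
     - sum_list (map w (concat (map segT tp)))" by auto
  show ?case
  proof (cases l)
    case (SimpleL e)
    then show ?thesis using IH by simp
  next
    case (DisjL a b)
    have "disj_pair src dst E a b (D a b)" using disjL_pair[OF D] lE DisjL by simp
    then have "distinct (fst (D a b))" "distinct (snd (D a b))" unfolding disj_pair_def using simple_path_distinct by metis+
    then have "pair_weight w (D a b) = sum_list (map w (fst (D a b))) + sum_list (map w (snd (D a b)))"
      unfolding pair_weight_def by (simp add: sum_list_distinct_conv_sum_set)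
    then show ?thesis using IH DisjL by simp
  qed
qed

lemma T_in_E: "walk (ttl src) (thd dst) (tE V E src dst) u tp v \<Longrightarrow> set (concat (map segT tp)) \<subseteq> E"
proof (induction tp arbitrary: u)
  case Nil then show ?case by simp
next
  case (Cons l tp)
  then show ?case by (cases l) (auto simp: tE_def)
qed

lemma costT: "rsp_feasible V E src dst p s t S tp \<Longrightarrow>
   (\<Sum>e\<in>set (concat (map segT tp)). - ln (1 - p e)) \<le> - ln S"
proof -
  assume f: "rsp_feasible V E src dst p s t S tp"
  then have w: "walk (ttl src) (thd dst) (tE V E src dst) s tp t" unfolding rsp_feasible_def simple_path_def by simp
  have "(\<Sum>e\<in>set (concat (map segT tp)). - ln (1 - p e)) \<le> sum_list (map (\<lambda>e. - ln (1 - p e)) (concat (map segT tp)))"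
    using T_in_E[OF w] cpos by (intro sum_set_le_list) (auto intro: less_imp_le)
  also have "\<dots> = sum_list (map (tcost p) tp)" by (simp add: tcost_segT)
  also have "\<dots> \<le> - ln S" using f unfolding rsp_feasible_def by simp
  finally show ?thesis .
qed

lemma M2:
  assumes "rsp_feasible V E src dst p s t S tp"
  shows "\<exists>P Q. simple_path src dst E s P t \<and> simple_path src dst E s Q t \<and>
      set P \<inter> set Q \<subseteq> set (concat (map segT tp)) \<and>
      set P \<union> set Q \<subseteq> set (concat (map (seg1 D) tp)) \<union> set (concat (map (seg2 D) tp)) \<and>
      feasible_conn src dst E p s t S (set P) (set Q)"
proof -
  have w: "walk (ttl src) (thd dst) (tE V E src dst) s tp t" using assms unfolding rsp_feasible_def simple_path_def by simp
  from chain[OF D w] obtain P Q where PQ: "simple_path src dst E s P t" "simple_path src dst E s Q t"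
    "set P \<inter> set Q \<subseteq> set (concat (map segT tp))"
    "set P \<union> set Q \<subseteq> set (concat (map (seg1 D) tp)) \<union> set (concat (map (seg2 D) tp))" by blast
  have "(\<Sum>e\<in>set P \<inter> set Q. - ln (1 - p e)) \<le> (\<Sum>e\<in>set (concat (map segT tp)). - ln (1 - p e))"
    using PQ(3) T_in_E[OF w] cpos by (intro sum_mono_sub) (auto intro: less_imp_le)
  also have "\<dots> \<le> - ln S" using costT[OF assms] .
  finally have "feasible_conn src dst E p s t S (set P) (set Q)" using pairfeas PQ by blast
  then show ?thesis using PQ by blast
qed

lemma Wt_opt: "rsp_optimal V E src dst p w D s t S tp \<Longrightarrow> feasible_conn src dst E p s t S \<pi>1 \<pi>2 \<Longrightarrow>
  sum_list (map (tweight w D) tp) \<le> W_CO w \<pi>1 \<pi>2"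
proof -
  assume o: "rsp_optimal V E src dst p w D s t S tp" and f: "feasible_conn src dst E p s t S \<pi>1 \<pi>2"
  from M1[OF f] obtain tq where "rsp_feasible V E src dst p s t S tq" "sum_list (map (tweight w D) tq) \<le> W_CO w \<pi>1 \<pi>2"
    by blast
  then show ?thesis using o unfolding rsp_optimal_def by force
qed

lemma pot:
  assumes wG: "walk (ttl src) (thd dst) (tE V E src dst) s tp t"
  shows "\<gamma> \<noteq> [] \<Longrightarrow> walk src dst UNIV z \<gamma> z' \<Longrightarrow> set \<gamma> \<subseteq> set (concat (map segT tp)) \<Longrightarrow>
     distinct (s # map (thd dst) tp) \<Longrightarrow>
     \<exists>i j. i < j \<and> j < Suc (length tp) \<and> (s # map (thd dst) tp) ! i = z \<and> (s # map (thd dst) tp) ! j = z'"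
proof (induction \<gamma> arbitrary: z)
  case Nil then show ?case by simp
next
  case (Cons e \<gamma>)
  let ?ns = "s # map (thd dst) tp"
  have "e \<in> set (concat (map segT tp))" using Cons.prems by simp
  then obtain l where l: "l \<in> set tp" "e \<in> set (segT l)" by auto
  have "l = SimpleL e" using l(2) by (cases l) auto
  then obtain k where k: "k < length tp" "tp ! k = SimpleL e" using l(1) by (metis in_set_conv_nth)
  have se: "src e = ?ns ! k" using walk_nth_src[OF wG k(1)] k(2) by simp
  have de: "dst e = ?ns ! Suc k" using k by simp
  have ze: "z = src e" and wg: "walk src dst UNIV (dst e) \<gamma> z'" using Cons.prems by auto
  show ?case
  proof (cases "\<gamma> = []")
    case True
    then have "z' = dst e" using wg by simp
    then show ?thesis using se de ze k(1) by (intro exI[of _ k] exI[of _ "Suc k"]) auto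
  next
    case False
    from Cons.IH[OF False wg] Cons.prems obtain i j where ij: "i < j" "j < Suc (length tp)"
      "?ns ! i = dst e" "?ns ! j = z'" by auto
    have "i = Suc k" using ij de Cons.prems(4) k(1) nth_eq_iff_index_eq[of ?ns i "Suc k"] by simp
    then show ?thesis using ij se ze by (intro exI[of _ k] exI[of _ j]) auto
  qed
qed

end

context netctx begin

lemma sound:
  assumes opt: "rsp_optimal V E src dst p w D s t S tp"
  shows "feasible_conn src dst E p s t S (set (concat (map (seg1 D) tp))) (set (concat (map (seg2 D) tp))) \<and>
    W_CO w (set (concat (map (seg1 D) tp))) (set (concat (map (seg2 D) tp))) = sum_list (map (tweight w D) tp)"
proof -
  define W1 where "W1 = concat (map (seg1 D) tp)"
  define W2 where "W2 = concat (map (seg2 D) tp)"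
  define T where "T = concat (map segT tp)"
  define U where "U = set W1 \<union> set W2"
  define Wt where "Wt = sum_list (map (tweight w D) tp)"
  have feas: "rsp_feasible V E src dst p s t S tp" using opt unfolding rsp_optimal_def by simp
  have wG: "walk (ttl src) (thd dst) (tE V E src dst) s tp t" and dist: "distinct (s # map (thd dst) tp)"
    using feas unfolding rsp_feasible_def simple_path_def by auto
  have wW: "walk src dst E s W1 t" "walk src dst E s W2 t" using walks_seg[OF wG] unfolding W1_def W2_def by auto
  have UE: "U \<subseteq> E" using wW walk_iff unfolding U_def by (metis Un_least)
  have finU: "finite U" unfolding U_def by simp
  have WtEq: "Wt = sum_list (map w W1) + sum_list (map w W2) - sum_list (map w T)"
    unfolding Wt_def W1_def W2_def T_def by (rule weight_seg[OF wG])
  have cT: "(\<Sum>e\<in>set T. - ln (1 - p e)) \<le> - ln S" using costT[OF feas] unfolding T_def .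
  have TE: "set T \<subseteq> E" using T_in_E[OF wG] unfolding T_def .
  have cnt: "\<And>e. count_list T e \<le> count_list W1 e \<and> count_list T e \<le> count_list W2 e"
    unfolding T_def W1_def W2_def by (rule count_segT)
  have TU: "set T \<subseteq> U"
  proof
    fix e assume "e \<in> set T"
    then have "count_list T e \<noteq> 0" by (simp add: count_list_0_iff)
    then have "count_list W1 e \<noteq> 0" using cnt[of e] by linarith
    then show "e \<in> U" unfolding U_def by (simp add: count_list_0_iff)
  qed
  have better: "\<And>P Q. simple_path src dst E s P t \<Longrightarrow> simple_path src dst E s Q t \<Longrightarrow> set P \<inter> set Q \<subseteq> set T \<Longrightarrow>
      Wt \<le> (\<Sum>e\<in>set P \<union> set Q. w e)"
  proof -
    fix P Q assume h: "simple_path src dst E s P t" "simple_path src dst E s Q t" "set P \<inter> set Q \<subseteq> set T"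
    have "(\<Sum>e\<in>set P \<inter> set Q. - ln (1 - p e)) \<le> (\<Sum>e\<in>set T. - ln (1 - p e))"
      using h(3) TE cpos by (intro sum_mono_sub) (auto intro: less_imp_le)
    then have "feasible_conn src dst E p s t S (set P) (set Q)" using pairfeas[OF h(1,2)] cT by linarith
    from Wt_opt[OF opt this] show "Wt \<le> (\<Sum>e\<in>set P \<union> set Q. w e)" unfolding Wt_def W_CO_def .
  qed
  from M2[OF feas] obtain P0 Q0 where PQ0: "simple_path src dst E s P0 t" "simple_path src dst E s Q0 t"
    "set P0 \<inter> set Q0 \<subseteq> set T" "set P0 \<union> set Q0 \<subseteq> U" unfolding T_def U_def W1_def W2_def by blast
  have le1: "Wt \<le> (\<Sum>e\<in>U. w e)"
  proof -
    have "Wt \<le> (\<Sum>e\<in>set P0 \<union> set Q0. w e)" using better[OF PQ0(1-3)] .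
    also have "\<dots> \<le> (\<Sum>e\<in>U. w e)" using PQ0(4) UE wpos finU by (intro sum_mono_sub) (auto intro: less_imp_le)
    finally show ?thesis .
  qed
  define n where "n = (\<lambda>e. real (count_list W1 e) + real (count_list W2 e) - real (count_list T e))"
  have WtU: "Wt = (\<Sum>e\<in>U. n e * w e)"
  proof -
    have a: "sum_list (map w W1) = (\<Sum>e\<in>U. real (count_list W1 e) * w e)"
      using finU unfolding U_def by (intro sum_list_count_real) auto
    have b: "sum_list (map w W2) = (\<Sum>e\<in>U. real (count_list W2 e) * w e)"
      using finU unfolding U_def by (intro sum_list_count_real) auto
    have c: "sum_list (map w T) = (\<Sum>e\<in>U. real (count_list T e) * w e)"
      using finU TU by (intro sum_list_count_real) auto
    have "(\<Sum>e\<in>U. n e * w e) = (\<Sum>e\<in>U. real (count_list W1 e) * w e + real (count_list W2 e) * w e - real (count_list T e) * w e)"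
      unfolding n_def by (intro sum.cong) (simp_all add: algebra_simps)
    also have "\<dots> = (\<Sum>e\<in>U. real (count_list W1 e) * w e) + (\<Sum>e\<in>U. real (count_list W2 e) * w e) - (\<Sum>e\<in>U. real (count_list T e) * w e)"
      by (simp add: sum.distrib sum_subtractf)
    finally show ?thesis unfolding WtEq a b c by simp
  qed
  have nge: "\<And>e. e \<in> U \<Longrightarrow> 1 \<le> n e"
  proof -
    fix e assume "e \<in> U"
    then have "count_list W1 e \<noteq> 0 \<or> count_list W2 e \<noteq> 0" unfolding U_def by (auto simp: count_list_0_iff)
    moreover have "real (count_list T e) \<le> real (count_list W1 e)" "real (count_list T e) \<le> real (count_list W2 e)"
      using cnt[of e] by auto
    ultimately show "1 \<le> n e" unfolding n_def by linarith
  qed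
  have neq: "\<And>e. e \<in> U \<Longrightarrow> n e = 1"
  proof -
    have "(\<Sum>e\<in>U. (n e - 1) * w e) = (\<Sum>e\<in>U. n e * w e - w e)"
      by (intro sum.cong) (simp_all add: left_diff_distrib)
    also have "\<dots> = Wt - (\<Sum>e\<in>U. w e)" unfolding WtU by (rule sum_subtractf)
    finally have "(\<Sum>e\<in>U. (n e - 1) * w e) = Wt - (\<Sum>e\<in>U. w e)" .
    then have s0: "(\<Sum>e\<in>U. (n e - 1) * w e) \<le> 0" using le1 by simp
    have nn: "\<forall>e\<in>U. 0 \<le> (n e - 1) * w e"
    proof
      fix e assume e: "e \<in> U"
      then have "0 \<le> n e - 1" using nge by simp
      moreover have "0 \<le> w e" using wpos e UE by (auto intro: less_imp_le)
      ultimately show "0 \<le> (n e - 1) * w e" by (rule mult_nonneg_nonneg)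
    qed
    have "0 \<le> (\<Sum>e\<in>U. (n e - 1) * w e)" using nn by (intro sum_nonneg) auto
    then have "(\<Sum>e\<in>U. (n e - 1) * w e) = 0" using s0 by linarith
    then have z: "\<forall>e\<in>U. (n e - 1) * w e = 0"
      using sum_nonneg_eq_0_iff[OF finU, of "\<lambda>e. (n e - 1) * w e"] nn by simp
    show "\<And>e. e \<in> U \<Longrightarrow> n e = 1"
    proof -
      fix e assume e: "e \<in> U"
      have "0 < w e" using wpos e UE by auto
      moreover have "(n e - 1) * w e = 0" using z e by auto
      ultimately show "n e = 1" by simp
    qed
  qed
  have WCO: "(\<Sum>e\<in>U. w e) = Wt" unfolding WtU by (intro sum.cong) (simp_all add: neq)
  have dW1: "distinct W1"
  proof (rule distinct_count, rule allI)
    fix e show "count_list W1 e \<le> 1"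
    proof (cases "e \<in> U")
      case True then show ?thesis using neq[OF True] cnt[of e] unfolding n_def by linarith
    next
      case False then show ?thesis unfolding U_def by (simp add: count_list_0_iff)
    qed
  qed
  have dW2: "distinct W2"
  proof (rule distinct_count, rule allI)
    fix e show "count_list W2 e \<le> 1"
    proof (cases "e \<in> U")
      case True then show ?thesis using neq[OF True] cnt[of e] unfolding n_def by linarith
    next
      case False then show ?thesis unfolding U_def by (simp add: count_list_0_iff)
    qed
  qed
  have W12T: "set W1 \<inter> set W2 \<subseteq> set T"
  proof
    fix e assume e: "e \<in> set W1 \<inter> set W2"
    then have "count_list W1 e \<noteq> 0" "count_list W2 e \<noteq> 0" by (auto simp: count_list_0_iff)
    moreover have "e \<in> U" using e unfolding U_def by auto
    ultimately have "count_list T e \<noteq> 0" using neq[of e] unfolding n_def by auto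
    then show "e \<in> set T" by (simp add: count_list_0_iff)
  qed
  have nodes: "\<And>Y Z. walk src dst E s Y t \<Longrightarrow> walk src dst E s Z t \<Longrightarrow> distinct Y \<Longrightarrow> set Y \<union> set Z = U \<Longrightarrow>
     set Y \<inter> set Z \<subseteq> set T \<Longrightarrow> distinct (s # map dst Y)"
  proof (rule ccontr)
    fix Y Z assume h: "walk src dst E s Y t" "walk src dst E s Z t" "distinct Y" "set Y \<union> set Z = U"
      "set Y \<inter> set Z \<subseteq> set T" "\<not> distinct (s # map dst Y)"
    from loop_decomp[OF h(1) h(6)] obtain \<alpha> \<gamma> \<beta> z where L: "Y = \<alpha> @ \<gamma> @ \<beta>" "\<gamma> \<noteq> []"
      "walk src dst E s \<alpha> z" "walk src dst E z \<gamma> z" "walk src dst E z \<beta> t" by blast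
    have "\<not> set \<gamma> \<subseteq> set T"
    proof
      assume sg: "set \<gamma> \<subseteq> set T"
      have wg: "walk src dst UNIV z \<gamma> z" using L(4) walk_iff by metis
      from pot[OF wG L(2) wg sg[unfolded T_def] dist] obtain i j where ij: "i < j" "j < Suc (length tp)"
        "(s # map (thd dst) tp) ! i = z" "(s # map (thd dst) tp) ! j = z" by blast
      then show False using dist nth_eq_iff_index_eq[of "s # map (thd dst) tp" i j] by simp
    qed
    then obtain g where g: "g \<in> set \<gamma>" "g \<notin> set T" by blast
    have gU: "g \<in> U" using g L(1) h(4) by auto
    have gab: "g \<notin> set (\<alpha> @ \<beta>)" using h(3) L(1) g(1) by auto
    have gZ: "g \<notin> set Z" using g L(1) h(5) by auto
    have wab: "walk src dst E s (\<alpha> @ \<beta>) t" using L by (auto simp: walk_append)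
    obtain P1 where P1: "simple_path src dst E s P1 t" "set P1 \<subseteq> set (\<alpha> @ \<beta>)" using shortcut[OF wab] by blast
    obtain Q1 where Q1: "simple_path src dst E s Q1 t" "set Q1 \<subseteq> set Z" using shortcut[OF h(2)] by blast
    have "set P1 \<inter> set Q1 \<subseteq> set T" using P1(2) Q1(2) h(5) L(1) by auto
    then have "Wt \<le> (\<Sum>e\<in>set P1 \<union> set Q1. w e)" using better P1(1) Q1(1) by blast
    also have "\<dots> \<le> (\<Sum>e\<in>U - {g}. w e)"
    proof (rule sum_mono_sub)
      show "finite (U - {g})" using finU by simp
      show "set P1 \<union> set Q1 \<subseteq> U - {g}" using P1(2) Q1(2) L(1) h(4) gab gZ by auto
      show "\<forall>b\<in>U - {g}. 0 \<le> w b" using UE wpos by (auto intro: less_imp_le)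
    qed
    also have "\<dots> < (\<Sum>e\<in>U. w e)"
      using sum.remove[OF finU gU, of w] wpos gU UE by auto
    finally show False using WCO by simp
  qed
  have s1: "simple_path src dst E s W1 t" using nodes[OF wW(1) wW(2) dW1] W12T unfolding U_def simple_path_def
    using wW by auto
  have s2: "simple_path src dst E s W2 t" using nodes[OF wW(2) wW(1) dW2] W12T unfolding U_def simple_path_def
    using wW by (auto simp: Un_commute Int_commute)
  have "(\<Sum>e\<in>set W1 \<inter> set W2. - ln (1 - p e)) \<le> (\<Sum>e\<in>set T. - ln (1 - p e))"
    using W12T TE cpos by (intro sum_mono_sub) (auto intro: less_imp_le)
  then have "feasible_conn src dst E p s t S (set W1) (set W2)" using pairfeas[OF s1 s2] cT by linarith
  moreover have "W_CO w (set W1) (set W2) = Wt" unfolding W_CO_def using WCO unfolding U_def .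
  ultimately show ?thesis unfolding W1_def W2_def Wt_def by simp
qed

end

theorem theorem3:
  fixes V :: "'v set" and E :: "'e set" and src dst :: "'e \<Rightarrow> 'v"
    and p w :: "'e \<Rightarrow> real" and pmax S :: real and s t :: 'v
    and res :: "('e set \<times> 'e set) option"
  assumes "network V E src dst p pmax w"
    and "s \<in> V" and "t \<in> V"
    and "S_min E pmax \<le> S" and "S \<le> 1"
    and "co_tscmq V E src dst p w s t S res"
  shows "((\<exists>\<pi>1 \<pi>2. feasible_conn src dst E p s t S \<pi>1 \<pi>2) \<longrightarrow>
            (\<exists>\<pi>1 \<pi>2. res = Some (\<pi>1, \<pi>2) \<and> co_csmq_optimal src dst E p w s t S \<pi>1 \<pi>2))
       \<and> ((\<not> (\<exists>\<pi>1 \<pi>2. feasible_conn src dst E p s t S \<pi>1 \<pi>2)) \<longrightarrow> res = None)"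
proof -
  have pm: "pmax < 1" using assms(1) unfolding network_def by simp
  have "0 < S_min E pmax" unfolding S_min_def using pm by simp
  then have Spos: "0 < S" using assms(4) by simp
  obtain D where D: "edspop_choice V E src dst w D" and br: "if \<exists>tp. rsp_feasible V E src dst p s t S tp
         then (\<exists>tp. rsp_optimal V E src dst p w D s t S tp \<and> res = Some (build D tp))
         else res = None" using assms(6) unfolding co_tscmq_def by blast
  interpret netctx V E src dst p w pmax S s t D using assms(1,2) Spos D by unfold_locales
  show ?thesis
  proof (intro conjI impI)
    assume "\<exists>\<pi>1 \<pi>2. feasible_conn src dst E p s t S \<pi>1 \<pi>2"
    then obtain \<pi>1 \<pi>2 where "feasible_conn src dst E p s t S \<pi>1 \<pi>2" by blast
    from M1[OF this] have "\<exists>tp. rsp_feasible V E src dst p s t S tp" by blast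
    then obtain tp where o: "rsp_optimal V E src dst p w D s t S tp" and r: "res = Some (build D tp)" using br by auto
    have sd: "feasible_conn src dst E p s t S (set (concat (map (seg1 D) tp))) (set (concat (map (seg2 D) tp)))"
      "W_CO w (set (concat (map (seg1 D) tp))) (set (concat (map (seg2 D) tp))) = sum_list (map (tweight w D) tp)"
      using sound[OF o] by auto
    have "co_csmq_optimal src dst E p w s t S (set (concat (map (seg1 D) tp))) (set (concat (map (seg2 D) tp)))"
      unfolding co_csmq_optimal_def using sd Wt_opt[OF o] by auto
    then show "\<exists>\<pi>1 \<pi>2. res = Some (\<pi>1, \<pi>2) \<and> co_csmq_optimal src dst E p w s t S \<pi>1 \<pi>2"
      using r by (auto simp: build_eq)
  next
    assume nf: "\<not> (\<exists>\<pi>1 \<pi>2. feasible_conn src dst E p s t S \<pi>1 \<pi>2)"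
    have "\<not> (\<exists>tp. rsp_feasible V E src dst p s t S tp)"
    proof
      assume "\<exists>tp. rsp_feasible V E src dst p s t S tp"
      then obtain tp where "rsp_feasible V E src dst p s t S tp" by blast
      from M2[OF this] nf show False by blast
    qed
    then show "res = None" using br by simp
  qed
qed

end
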